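(* Let $P\ge1$, $\mathbf{R}\in\mathbb{N}_0^P$, $\mathbf{d}=(d_1,\dots,d_P)\in H_0^P$, and $w_p=a_p/b_p$ ($1\le p\le P$) with $a_p,b_p$ coprime positive integers. Let $w=\operatorname{lcm}(a_1,\dots,a_P)/\gcd(b_1,\dots,b_P)$ and $\beta_p=w/w_p$ (a positive integer). Then, as meromorphic functions of $s$, \[ \zeta^B(\mathbf{R},s,\mathbf{d}|\mathbf{w})=w^{-s}\prod_{p=1}^P\beta_p^{R_p}\sum_{\substack{0\le k_p\le\beta_p-1\\ p=1,\dots,P}}\zeta^B\Big(\mathbf{R},s,\Big(\frac{d_p+k_p}{\beta_p}\Big)_{p\in[\![1,P]\!]}\,\Big|\,(1,\dots,1)\Big). \]
   Context: $H_0=\{\operatorname{Re}s>0\}$, $\mathbb{N}_0=\{0,1,\dots\}$, principal branch of powers. For $\mathbf{R}\in\mathbb{N}_0^P$, $\mathbf{c},\mathbf{d}\in H_0^P$, the generalized Barnes zeta function is $\zeta^B(\mathbf{R},s,\mathbf{d}|\mathbf{c})=\sum_{\mathbf{n}\in\mathbb{N}_0^P}\prod_p(n_p+d_p)^{R_p}\big(\sum_pc_p(n_p+d_p)\big)^{-s}$ (absolutely convergent for $\operatorname{Re}s$ large), meromorphically continued to $\mathbb{C}$. *)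

theory Defs
  imports "HOL-Complex_Analysis.Complex_Analysis"
begin

text \<open>Vectors in C^P / N_0^P are represented as functions on nat, only the
  components with index p < P (0-based) being relevant.  The index set
  N_0^P of the Barnes series is PiE {..<P} (\<lambda>_. UNIV).\<close>

definition barnes_series ::
  "nat \<Rightarrow> (nat \<Rightarrow> nat) \<Rightarrow> complex \<Rightarrow> (nat \<Rightarrow> complex) \<Rightarrow> (nat \<Rightarrow> complex) \<Rightarrow> complex" where
  "barnes_series P R s d c =
     (\<Sum>\<^sub>\<infinity>n \<in> PiE {..<P} (\<lambda>_. UNIV).
        (\<Prod>p<P. (of_nat (n p) + d p) ^ R p) *
        (\<Sum>p<P. c p * (of_nat (n p) + d p)) powr (- s))"

definition is_barnes_continuation ::
  "nat \<Rightarrow> (nat \<Rightarrow> nat) \<Rightarrow> (nat \<Rightarrow> complex) \<Rightarrow> (nat \<Rightarrow> complex) \<Rightarrow> (complex \<Rightarrow> complex) \<Rightarrow> bool" where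
  "is_barnes_continuation P R d c f \<longleftrightarrow>
     f meromorphic_on UNIV \<and>
     (\<exists>\<sigma>::real. \<forall>s. Re s > \<sigma> \<longrightarrow> f s = barnes_series P R s d c)"

text \<open>The generalized Barnes zeta function (its meromorphic continuation;
  unique up to values on a sparse set, i.e. as a meromorphic function).\<close>

definition barnes_zeta ::
  "nat \<Rightarrow> (nat \<Rightarrow> nat) \<Rightarrow> complex \<Rightarrow> (nat \<Rightarrow> complex) \<Rightarrow> (nat \<Rightarrow> complex) \<Rightarrow> complex" where
  "barnes_zeta P R s d c = (SOME f. is_barnes_continuation P R d c f) s"

end

theory Submission
  imports Defs
begin

definition EE :: "complex \<Rightarrow> real" where "EE s = exp (pi / 2 * \<bar>Im s\<bar>)"

lemma norm_powr_Re_pos_bound: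
  fixes x s :: complex
  assumes "Re x > 0"
  shows "norm (x powr (-s)) \<le> norm x powr (- Re s) * EE s"
proof -
  have x0: "x \<noteq> 0" using assms by auto
  have A: "\<bar>Arg x\<bar> < pi/2" using Re_Ln_pos_lt_imp[OF assms] Arg_eq_Im_Ln[OF x0] by simp
  have "Im s * Arg x \<le> \<bar>Im s\<bar> * \<bar>Arg x\<bar>" by (metis abs_ge_self abs_mult)
  also have "\<dots> \<le> \<bar>Im s\<bar> * (pi/2)" using A by (intro mult_left_mono) auto
  finally have "exp (Im s * Arg x) \<le> EE s" unfolding EE_def by (simp add: mult.commute)
  moreover have "norm (x powr (-s)) = norm x powr (- Re s) * exp (Im s * Arg x)"
    by (simp add: norm_powr_complex)
  ultimately show ?thesis by (simp add: mult_left_mono)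
qed

lemma bound1:
  fixes a s :: complex
  assumes "Re a \<ge> 8" "Re s \<ge> 0"
  shows "norm ((of_nat n + a) powr (-s)) \<le> (real n + 8) powr (- Re s) * EE s"
proof -
  have "Re (of_nat n + a) > 0" using assms by simp
  hence "norm ((of_nat n + a) powr (-s)) \<le> norm (of_nat n + a) powr (- Re s) * EE s"
    by (rule norm_powr_Re_pos_bound)
  also have "norm (of_nat n + a) powr (- Re s) \<le> (real n + 8) powr (- Re s)"
  proof (rule powr_mono2')
    have "real n + 8 \<le> Re (of_nat n + a)" using assms by simp
    also have "\<dots> \<le> norm (of_nat n + a)" by (rule complex_Re_le_cmod)
    finally show "real n + 8 \<le> norm (of_nat n + a)" .
  qed (use assms in auto)
  finally show ?thesis by (simp add: EE_def mult_right_mono)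
qed

lemma bound2:
  fixes a s :: complex
  assumes "Re a \<ge> 8" "Re s \<ge> 2"
  shows "norm ((of_nat n + a) powr (-s)) \<le> 8 powr (- Re s) * (64 / (real n + 8)^2) * EE s"
proof -
  have "(real n + 8) powr (- Re s) = 8 powr (- Re s) * ((real n + 8) / 8) powr (- Re s)"
    by (simp add: powr_divide)
  also have "((real n + 8) / 8) powr (- Re s) \<le> ((real n + 8) / 8) powr (- 2)"
    by (rule powr_mono) (use assms in auto)
  also have "((real n + 8) / 8) powr (- 2) = 64 / (real n + 8)^2"
    by (simp add: powr_minus powr_divide power2_eq_square divide_simps)
  finally have "(real n + 8) powr (- Re s) \<le> 8 powr (- Re s) * (64 / (real n + 8)^2)"
    by (simp add: mult_left_mono)
  moreover have "EE s \<ge> 0" by (simp add: EE_def)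
  ultimately show ?thesis using bound1[OF assms(1), of s n] assms
    by (smt (verit) mult_right_mono)
qed

lemma summable_64: "summable (\<lambda>n. 64 / (real n + 8)^2)"
proof -
  have "summable (\<lambda>n. inverse (real n ^ 2))" by (rule inverse_power_summable) auto
  hence "summable (\<lambda>n. inverse (real (n + 8) ^ 2))" by (subst summable_iff_shift) 
  hence "summable (\<lambda>n. 64 * inverse (real (n + 8) ^ 2))" by (rule summable_mult)
  thus ?thesis by (simp add: divide_inverse add.commute)
qed

definition C64 :: real where "C64 = (\<Sum>n. 64 / (real n + 8)^2)"

lemma G_summable:
  fixes a s :: complex
  assumes "Re a \<ge> 8" "Re s \<ge> 2"
  shows "summable (\<lambda>n. norm ((of_nat n + a) powr (-s)))"
  by (rule summable_comparison_test'[OF summable_mult2[OF summable_mult[OF summable_64, of "8 powr (- Re s)"], of "EE s"]])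
     (use bound2[OF assms] in \<open>auto simp: mult_ac\<close>)

definition Gs :: "complex \<Rightarrow> complex \<Rightarrow> complex" where
  "Gs a s = (\<Sum>n. (of_nat n + a) powr (-s))"

lemma G_bound:
  fixes a s :: complex
  assumes "Re a \<ge> 8" "Re s \<ge> 2"
  shows "norm (Gs a s) \<le> C64 * 8 powr (- Re s) * EE s"
proof -
  have "norm (Gs a s) \<le> (\<Sum>n. 8 powr (- Re s) * (64 / (real n + 8)^2) * EE s)"
    unfolding Gs_def
    by (rule norm_suminf_le[OF bound2[OF assms]])
       (intro summable_mult2 summable_mult summable_64)
  also have "\<dots> = C64 * 8 powr (- Re s) * EE s"
    unfolding C64_def
    using suminf_mult[OF summable_64, of "8 powr (- Re s) * EE s"] by (simp add: mult_ac)
  finally show ?thesis .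
qed

lemma holo_series:
  fixes f :: "nat \<Rightarrow> complex \<Rightarrow> complex"
  assumes S: "open S" and hol: "\<And>n. f n holomorphic_on S"
    and bnd: "\<And>z. z \<in> S \<Longrightarrow> \<exists>d M. 0 < d \<and> cball z d \<subseteq> S \<and> summable M \<and>
                 (\<forall>\<^sub>F n in sequentially. \<forall>x\<in>cball z d. norm (f n x) \<le> M n)"
  shows "(\<lambda>x. \<Sum>n. f n x) holomorphic_on S"
proof (rule holomorphic_uniform_sequence[OF S, where f = "\<lambda>N x. \<Sum>i<N. f i x"])
  show "(\<lambda>x. \<Sum>i<N. f i x) holomorphic_on S" for N
    by (intro holomorphic_intros hol)
  fix z assume "z \<in> S"
  then obtain d M where d: "0 < d" "cball z d \<subseteq> S" "summable M"
    "\<forall>\<^sub>F n in sequentially. \<forall>x\<in>cball z d. norm (f n x) \<le> M n" using bnd by blast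
  show "\<exists>d>0. cball z d \<subseteq> S \<and> uniform_limit (cball z d) (\<lambda>N x. \<Sum>i<N. f i x) (\<lambda>x. \<Sum>n. f n x) sequentially"
    using d Weierstrass_m_test_ev[OF d(4) d(3)] by blast
qed

lemma G_holo:
  assumes a: "Re a \<ge> 8"
  shows "Gs a holomorphic_on {s. 2 < Re s}"
proof -
  have eq: "Gs a = (\<lambda>s. \<Sum>n. (of_nat n + a) powr (-s))" by (simp add: Gs_def fun_eq_iff)
  show ?thesis unfolding eq
  proof (rule holo_series)
    show "open {s. 2 < Re s}" by (simp add: open_halfspace_Re_gt)
    show "(\<lambda>s. (of_nat n + a) powr (-s)) holomorphic_on {s. 2 < Re s}" for n
      by (intro holomorphic_intros)
    fix z assume z: "z \<in> {s. 2 < Re s}"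
    define d where "d = (Re z - 2) / 2"
    have d0: "d > 0" using z by (simp add: d_def)
    have sub: "cball z d \<subseteq> {s. 2 < Re s}"
    proof
      fix x assume "x \<in> cball z d"
      hence "\<bar>Re z - Re x\<bar> \<le> d" using abs_Re_le_cmod[of "z - x"] by (simp add: dist_norm)
      hence "Re z - Re x \<le> d" by linarith
      thus "x \<in> {s. 2 < Re s}" using z unfolding d_def by simp
    qed
    define M where "M n = 8 powr (- 2) * (64 / (real n + 8)^2) * exp (pi/2 * (\<bar>Im z\<bar> + d))" for n
    have "summable M" unfolding M_def by (intro summable_mult2 summable_mult summable_64)
    moreover have "\<forall>x\<in>cball z d. norm ((of_nat n + a) powr (-x)) \<le> M n" for n
    proof
      fix x assume x: "x \<in> cball z d"
      hence Rx: "Re x \<ge> 2" using sub by auto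
      have "\<bar>Im z - Im x\<bar> \<le> d" using x abs_Im_le_cmod[of "z - x"] by (simp add: dist_norm)
      hence "EE x \<le> exp (pi/2 * (\<bar>Im z\<bar> + d))" unfolding EE_def
        by (intro exp_mono mult_left_mono) auto
      moreover have "8 powr (- Re x) \<le> 8 powr (-2)" using Rx by (intro powr_mono) auto
      ultimately have "8 powr (- Re x) * (64 / (real n + 8)^2) * EE x \<le> M n"
        unfolding M_def by (intro mult_mono) (auto simp: EE_def)
      thus "norm ((of_nat n + a) powr (-x)) \<le> M n" using bound2[OF a Rx, of n] by linarith
    qed
    ultimately show "\<exists>d M. 0 < d \<and> cball z d \<subseteq> {s. 2 < Re s} \<and> summable M \<and>
            (\<forall>\<^sub>F n in sequentially. \<forall>x\<in>cball z d. norm ((of_nat n + a) powr (-x)) \<le> M n)"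
      using d0 sub by (intro exI[of _ d] exI[of _ M]) auto
  qed
qed

lemma powr_mult_Re_pos:
  fixes x y w :: complex
  assumes "Re x > 0" "Re y > 0"
  shows "(x * y) powr w = x powr w * y powr w"
proof -
  have x0: "x \<noteq> 0" and y0: "y \<noteq> 0" using assms by auto
  have "Ln (x * y) = Ln x + Ln y"
    using Re_Ln_pos_lt_imp[OF assms(1)] Re_Ln_pos_lt_imp[OF assms(2)] x0 y0
    by (intro Ln_times_simple) (auto simp: abs_less_iff)
  thus ?thesis using x0 y0 by (simp add: powr_def exp_add distrib_left)
qed

lemma binom_step:
  fixes x w :: complex
  assumes x: "Re x \<ge> 8"
  shows "(\<lambda>k. (w gchoose k) * x powr (w - of_nat k)) sums ((x + 1) powr w)"
proof -
  have x0: "x \<noteq> 0" using x by auto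
  have nx: "norm x \<ge> 8" using x complex_Re_le_cmod[of x] by linarith
  have nu: "norm (1/x) < 1" using nx by (simp add: norm_divide divide_less_eq)
  have "(\<lambda>k. x powr w * ((w gchoose k) * (1/x)^k)) sums (x powr w * (1 + 1/x) powr w)"
    by (rule sums_mult[OF gen_binomial_complex[OF nu]])
  moreover have "x powr w * ((w gchoose k) * (1/x)^k) = (w gchoose k) * x powr (w - of_nat k)" for k
    using x0 by (simp add: powr_diff power_one_over divide_inverse powr_nat' power_inverse)
  moreover have "x powr w * (1 + 1/x) powr w = (x + 1) powr w"
  proof -
    have "Re (1/x) = Re x / (norm x)^2" by (simp add: Re_divide cmod_power2)
    hence "Re (1/x) > 0" using x x0 by simp
    hence "Re (1 + 1/x) > 0" by simp
    hence "(x * (1 + 1/x)) powr w = x powr w * (1 + 1/x) powr w"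
      using x by (intro powr_mult_Re_pos) auto
    moreover have "x * (1 + 1/x) = x + 1" using x0 by (simp add: field_simps)
    ultimately show ?thesis by simp
  qed
  ultimately show ?thesis by simp
qed

lemma norm_gchoose_le:
  fixes z :: complex
  assumes "norm z \<le> real m"
  shows "norm (z gchoose k) \<le> real ((m + k) choose k)"
proof (induction k)
  case 0 thus ?case by simp
next
  case (Suc k)
  have "norm (z gchoose Suc k) = norm (z gchoose k) * (norm (z - of_nat k) / (real k + 1))"
  proof -
    have "norm (of_nat k + 1 :: complex) = real k + 1"
      by (metis norm_of_nat of_nat_Suc add.commute of_nat_1 of_nat_add)
    thus ?thesis by (simp add: gbinomial_Suc_rec norm_mult norm_divide)
  qed
  also have "norm (z - of_nat k) \<le> real m + real k"
    using norm_triangle_ineq4[of z "of_nat k"] assms by simp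
  hence "norm (z - of_nat k) / (real k + 1) \<le> (real m + real k + 1) / (real k + 1)"
    by (intro divide_right_mono) auto
  hence "norm (z gchoose k) * (norm (z - of_nat k) / (real k + 1)) \<le>
         real ((m + k) choose k) * ((real m + real k + 1) / (real k + 1))"
    using Suc.IH by (intro mult_mono) auto
  also have "real ((m + k) choose k) * ((real m + real k + 1) / (real k + 1)) = real ((m + Suc k) choose Suc k)"
  proof -
    have "real (Suc k) * real (Suc (m + k) choose Suc k) = real (Suc (m + k)) * real ((m + k) choose k)"
      using Suc_times_binomial[of k "m + k"] by (metis of_nat_mult)
    thus ?thesis by (simp add: field_simps)
  qed
  finally show ?case .
qed

lemma norm_gchoose_le2:
  fixes z :: complex
  assumes "norm z \<le> real m"
  shows "norm (z gchoose k) \<le> 2 ^ (m + k)"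
proof -
  have "real ((m + k) choose k) \<le> 2 ^ (m + k)"
    using binomial_le_pow2[of "m+k" k] by (metis of_nat_le_iff of_nat_numeral of_nat_power)
  thus ?thesis using norm_gchoose_le[OF assms, of k] by linarith
qed

definition Ts :: "complex \<Rightarrow> complex \<Rightarrow> complex" where "Ts a s = (1 - s) * Gs a s"
definition cc :: "complex \<Rightarrow> nat \<Rightarrow> complex" where
  "cc s j = ((1 - s) gchoose Suc j) / of_nat (j + 2)"

lemma prod_summable_real:
  fixes v u :: "nat \<Rightarrow> real"
  assumes "summable v" "summable u" "\<And>n. v n \<ge> 0" "\<And>j. u j \<ge> 0"
  shows "(\<lambda>(n,j). v n * u j) summable_on UNIV"
proof -
  have "(\<lambda>(n,j). v n * u j) summable_on Sigma UNIV (\<lambda>_. UNIV)"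
  proof (rule summable_on_SigmaI[where g = "\<lambda>n. v n * suminf u"])
    show "((\<lambda>y. case (n, y) of (n, j) \<Rightarrow> v n * u j) has_sum v n * suminf u) UNIV" for n
      using sums_nonneg_imp_has_sum[OF sums_mult[OF summable_sums[OF assms(2)], of "v n"]] assms
      by (simp add: mult_nonneg_nonneg)
    show "(\<lambda>n. v n * suminf u) summable_on UNIV"
      using assms by (subst summable_on_UNIV_nonneg_real_iff)
        (auto intro!: summable_mult2 mult_nonneg_nonneg suminf_nonneg)
  qed (use assms in \<open>auto intro!: mult_nonneg_nonneg\<close>)
  thus ?thesis by simp
qed

lemma x_pow_tendsto0:
  fixes a s :: complex
  assumes a: "Re a \<ge> 8" and s: "Re s > 1"
  shows "(\<lambda>n. (of_nat n + a) powr (1 - s)) \<longlonglongrightarrow> 0"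
proof (rule Lim_null_comparison)
  show "\<forall>\<^sub>F n in sequentially. norm ((of_nat n + a) powr (1 - s)) \<le> (real n + 8) powr (- Re (s - 1)) * EE (s - 1)"
    using bound1[OF a, of "s - 1"] s by (intro always_eventually allI) simp
  have "filterlim (\<lambda>n. 8 + real n) at_top sequentially"
    by (rule filterlim_tendsto_add_at_top[OF tendsto_const filterlim_real_sequentially])
  hence "filterlim (\<lambda>n. real n + 8) at_top sequentially" by (simp add: add.commute)
  hence "(\<lambda>n. (real n + 8) powr (- Re (s - 1))) \<longlonglongrightarrow> 0"
    by (rule tendsto_neg_powr[rotated]) (use s in simp)
  thus "(\<lambda>n. (real n + 8) powr (- Re (s - 1)) * EE (s - 1)) \<longlonglongrightarrow> 0"
    by (intro tendsto_mult_left_zero)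
qed

lemma T_identity:
  fixes a s :: complex
  assumes a: "Re a \<ge> 8" and s: "Re s \<ge> 2"
  shows "summable (\<lambda>j. cc s j * Ts a (s + of_nat j + 1))"
    and "Ts a s = - (a powr (1 - s)) - (\<Sum>j. cc s j * Ts a (s + of_nat j + 1))"
proof -
  define w where "w = 1 - s"
  obtain m :: nat where m: "norm w \<le> real m" using real_arch_simple by blast
  define A where "A n j = (w gchoose Suc j) * (of_nat n + a) powr (-(s + of_nat j))" for n j :: nat
  define v where "v n = 64 / (real n + 8)^2" for n :: nat
  define K where "K = 2 ^ m * 2 * 8 powr (- Re s) * EE s"
  define u where "u j = K * (1/4) ^ j" for j :: nat
  have v0: "v n \<ge> 0" for n by (simp add: v_def)
  have K0: "K \<ge> 0" by (simp add: K_def EE_def)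
  have u0: "u j \<ge> 0" for j using K0 by (simp add: u_def)
  have sv: "summable v" unfolding v_def by (rule summable_64)
  have su: "summable u" unfolding u_def by (intro summable_mult summable_geometric) auto
  have bnd: "norm (A n j) \<le> v n * u j" for n j
  proof -
    have Rsj: "Re (s + of_nat j) \<ge> 2" using s by simp
    have g: "norm (w gchoose Suc j) \<le> 2 ^ (m + Suc j)" by (rule norm_gchoose_le2[OF m])
    have p: "norm ((of_nat n + a) powr (-(s + of_nat j))) \<le> 8 powr (- Re s) * (1/8)^j * v n * EE s"
    proof -
      have "8 powr (- Re (s + of_nat j)) = 8 powr (- Re s + - real j)" by simp
      also have "\<dots> = 8 powr (- Re s) * 8 powr (- real j)" by (rule powr_add)
      also have "8 powr (- real j) = (1/8::real)^j"
        by (simp add: powr_minus powr_realpow power_one_over inverse_eq_divide)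
      finally have "8 powr (- Re (s + of_nat j)) = 8 powr (- Re s) * (1/8)^j" .
      moreover have "EE (s + of_nat j) = EE s" by (simp add: EE_def)
      ultimately show ?thesis using bound2[OF a Rsj, of n] by (simp add: v_def)
    qed
    have "norm (A n j) \<le> 2 ^ (m + Suc j) * (8 powr (- Re s) * (1/8)^j * v n * EE s)"
      unfolding A_def norm_mult by (intro mult_mono g p) auto
    also have "\<dots> = v n * u j"
    proof -
      have "(2::real) ^ (m + Suc j) * (1/8)^j = 2^m * 2 * (1/4)^j"
        by (simp add: power_add power_one_over field_simps flip: power_mult_distrib)
      thus ?thesis unfolding u_def K_def by (simp add: mult_ac)
    qed
    finally show ?thesis .
  qed
  have PS: "(\<lambda>(n,j). A n j) summable_on UNIV"
  proof -
    have "(\<lambda>x. norm ((\<lambda>(n,j). A n j) x)) summable_on UNIV"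
      by (rule Infinite_Sum.abs_summable_on_comparison_test'[OF prod_summable_real[OF sv su v0 u0]])
         (use bnd in auto)
    thus ?thesis by (rule abs_summable_summable)
  qed
  have PS': "(\<lambda>(j,n). A n j) summable_on UNIV"
  proof -
    have "(\<lambda>x. norm ((\<lambda>(j,n). A n j) x)) summable_on UNIV"
      by (rule Infinite_Sum.abs_summable_on_comparison_test'[OF prod_summable_real[OF su sv u0 v0]])
         (use bnd in \<open>auto simp: mult.commute\<close>)
    thus ?thesis by (rule abs_summable_summable)
  qed
  define L where "L n = (of_nat n + a + 1) powr w - (of_nat n + a) powr w" for n :: nat
  have inner1: "(\<Sum>\<^sub>\<infinity>j. A n j) = L n" for n
  proof -
    have "Re (of_nat n + a) \<ge> 8" using a by simp
    from binom_step[OF this, of w] have "(\<lambda>j. (w gchoose Suc j) * (of_nat n + a) powr (w - of_nat (Suc j))) sums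
        ((of_nat n + a + 1) powr w - (w gchoose 0) * (of_nat n + a) powr (w - of_nat 0))"
      by (subst sums_Suc_iff) simp
    moreover have eqw: "w - of_nat (Suc j) = -(s + of_nat j)" for j by (simp add: w_def)
    moreover have "(\<lambda>j. A n j) = (\<lambda>j. (w gchoose Suc j) * (of_nat n + a) powr (w - of_nat (Suc j)))"
      unfolding A_def by (simp only: eqw)
    ultimately have "(\<lambda>j. A n j) sums L n" by (simp add: L_def)
    moreover have "summable (\<lambda>j. norm (A n j))"
      by (rule summable_comparison_test'[OF summable_mult[OF su, of "v n"]]) (use bnd in auto)
    ultimately show ?thesis by (intro infsumI norm_summable_imp_has_sum)
  qed
  define B where "B j = (w gchoose Suc j) * Gs a (s + of_nat j)" for j :: nat
  have inner2: "(\<Sum>\<^sub>\<infinity>n. A n j) = B j" for j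
  proof -
    have Rsj: "Re (s + of_nat j) \<ge> 2" using s by simp
    have "((\<lambda>n. (of_nat n + a) powr (-(s + of_nat j))) has_sum Gs a (s + of_nat j)) UNIV"
      unfolding Gs_def
      using norm_summable_imp_has_sum[OF G_summable[OF a Rsj] summable_sums[OF summable_norm_cancel[OF G_summable[OF a Rsj]]]] .
    from has_sum_cmult_right[OF this, of "w gchoose Suc j"] show ?thesis
      unfolding A_def B_def by (rule infsumI)
  qed
  have swap: "(\<Sum>\<^sub>\<infinity>n. \<Sum>\<^sub>\<infinity>j. A n j) = (\<Sum>\<^sub>\<infinity>j. \<Sum>\<^sub>\<infinity>n. A n j)"
    using infsum_swap_banach[of "\<lambda>n j. A n j" UNIV UNIV] PS by simp
  have Lsum: "L summable_on UNIV"
    using summable_on_Sigma_banach[of "\<lambda>n j. A n j" UNIV "\<lambda>_. UNIV"] PS inner1 by simp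
  have Bsum: "B summable_on UNIV"
    using summable_on_Sigma_banach[of "\<lambda>j n. A n j" UNIV "\<lambda>_. UNIV"] PS' inner2 by simp
  have tele: "L sums (0 - (a powr w))"
  proof -
    have "(\<lambda>n. (of_nat n + a) powr w) \<longlonglongrightarrow> 0"
      unfolding w_def by (rule x_pow_tendsto0[OF a]) (use s in simp)
    from telescope_sums[OF this] have "(\<lambda>n. (of_nat (Suc n) + a) powr w - (of_nat n + a) powr w) sums (0 - (a powr w))"
      by simp
    moreover have "(\<lambda>n. (of_nat (Suc n) + a) powr w - (of_nat n + a) powr w) = L"
      by (simp add: L_def fun_eq_iff add_ac)
    ultimately show ?thesis by simp
  qed
  have "infsum L UNIV = - (a powr w)"
    using sums_unique2[OF has_sum_imp_sums[OF has_sum_infsum[OF Lsum]] tele] by simp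
  hence "infsum B UNIV = - (a powr w)" using swap inner1 inner2 by simp
  hence Bs: "B sums (- (a powr w))"
    using has_sum_imp_sums[OF has_sum_infsum[OF Bsum]] by simp
  have B0: "B 0 = Ts a s" by (simp add: B_def Ts_def w_def)
  have BS: "B (Suc j) = cc s j * Ts a (s + of_nat j + 1)" for j
  proof -
    have "B (Suc j) = (w gchoose Suc j) * ((w - of_nat (Suc j)) / (of_nat (Suc j) + 1)) * Gs a (s + of_nat j + 1)"
      unfolding B_def by (subst gbinomial_Suc_rec) (simp add: add_ac)
    also have "\<dots> = cc s j * Ts a (s + of_nat j + 1)"
      by (simp add: cc_def Ts_def w_def field_simps)
    finally show ?thesis .
  qed
  have sB: "summable B" using Bs by (simp add: sums_iff)
  have feq: "(\<lambda>j. cc s j * Ts a (s + of_nat j + 1)) = (\<lambda>j. B (Suc j))" using BS by simp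
  show "summable (\<lambda>j. cc s j * Ts a (s + of_nat j + 1))"
    unfolding feq using sB summable_Suc_iff by blast
  have "(\<Sum>j. B (Suc j)) = suminf B - B 0" by (rule suminf_split_head[OF sB])
  thus "Ts a s = - (a powr (1 - s)) - (\<Sum>j. cc s j * Ts a (s + of_nat j + 1))"
    using Bs B0 unfolding feq by (simp add: sums_iff w_def)
qed

lemma holo_gchoose: "(\<lambda>s. (f s) gchoose k) holomorphic_on S" if "f holomorphic_on S"
  for f :: "complex \<Rightarrow> complex"
  unfolding gbinomial_prod_rev by (intro holomorphic_intros that) auto

lemma holo_shift:
  assumes "f holomorphic_on T" "\<And>s. s \<in> S \<Longrightarrow> s + c \<in> T"
  shows "(\<lambda>s. f (s + c)) holomorphic_on S"
proof -
  have "f \<circ> (\<lambda>s. s + c) holomorphic_on S"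
    by (rule holomorphic_on_compose_gen[OF _ assms(1)]) (use assms(2) in \<open>auto intro!: holomorphic_intros\<close>)
  thus ?thesis by (simp add: o_def)
qed

lemma T_strip_step:
  fixes a :: complex and K :: nat
  assumes a: "Re a \<ge> 8"
    and f: "f holomorphic_on {s. 2 - real K < Re s}" "\<And>s. 2 < Re s \<Longrightarrow> f s = Ts a s"
  defines "g \<equiv> (\<lambda>s. - (a powr (1 - s)) - (\<Sum>j. cc s j * f (s + of_nat j + 1)))"
  shows "g holomorphic_on {s. 2 - real (Suc K) < Re s}" "\<And>s. 2 < Re s \<Longrightarrow> g s = Ts a s"
proof -
  show "g s = Ts a s" if "2 < Re s" for s
  proof -
    have "f (s + of_nat j + 1) = Ts a (s + of_nat j + 1)" for j using that by (intro f(2)) simp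
    thus ?thesis unfolding g_def using T_identity(2)[OF a, of s] that by simp
  qed
  define \<Omega> where "\<Omega> = {s. 2 - real (Suc K) < Re s}"
  have op: "open \<Omega>" unfolding \<Omega>_def by (simp add: open_halfspace_Re_gt)
  have hol_terms: "(\<lambda>s. cc s j * f (s + of_nat j + 1)) holomorphic_on \<Omega>" for j
  proof -
    have eq: "(\<lambda>s. cc s j * f (s + of_nat j + 1)) = (\<lambda>s. (((1-s) gchoose Suc j) * f (s + (of_nat j + 1))) / of_nat (j+2))"
      by (auto simp: cc_def add.assoc fun_eq_iff)
    have nz: "(of_nat (j+2)::complex) \<noteq> 0" by (simp only: of_nat_eq_0_iff)
    have h1: "(\<lambda>s. f (s + (of_nat j + 1))) holomorphic_on \<Omega>"
      by (rule holo_shift[OF f(1)]) (auto simp: \<Omega>_def)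
    have h2: "(\<lambda>s. ((1-s) gchoose Suc j)) holomorphic_on \<Omega>"
      by (intro holo_gchoose holomorphic_intros)
    show ?thesis unfolding eq
      by (rule holomorphic_on_divide[OF holomorphic_on_mult[OF h2 h1] holomorphic_on_const]) (use nz in auto)
  qed
  have "(\<lambda>s. \<Sum>j. cc s j * f (s + of_nat j + 1)) holomorphic_on \<Omega>"
  proof (rule holo_series[OF op hol_terms])
    fix z assume z: "z \<in> \<Omega>"
    define d where "d = min 1 ((Re z - (2 - real (Suc K))) / 2)"
    have d0: "d > 0" using z by (simp add: d_def \<Omega>_def)
    have d1: "d \<le> 1" by (simp add: d_def)
    have cb: "Re s \<ge> Re z - d" "\<bar>Im s\<bar> \<le> \<bar>Im z\<bar> + 1" "norm s \<le> norm z + 1"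
      "norm (1 - s) \<le> norm (1 - z) + 1" if "s \<in> cball z d" for s
    proof -
      have ds: "norm (z - s) \<le> d" using that by (simp add: dist_norm)
      show "Re s \<ge> Re z - d" using ds abs_Re_le_cmod[of "z - s"] by simp
      show "\<bar>Im s\<bar> \<le> \<bar>Im z\<bar> + 1" using ds d1 abs_Im_le_cmod[of "z - s"] by simp
      show "norm s \<le> norm z + 1" using ds d1 norm_triangle_ineq2[of s z] by (simp add: norm_minus_commute)
      show "norm (1 - s) \<le> norm (1 - z) + 1" using ds d1 norm_triangle_ineq2[of "1 - s" "1 - z"]
        by (simp add: norm_minus_commute)
    qed
    have sub: "cball z d \<subseteq> \<Omega>"
    proof
      fix s assume "s \<in> cball z d"
      hence "Re s \<ge> Re z - d" by (rule cb)
      moreover have "d \<le> (Re z - (2 - real (Suc K))) / 2" unfolding d_def by (rule min.cobounded2)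
      ultimately show "s \<in> \<Omega>" using z unfolding \<Omega>_def by simp
    qed
    obtain m :: nat where m: "norm z + norm (1 - z) + 1 \<le> real m" using real_arch_simple by blast
    obtain J :: nat where J: "3 + \<bar>Re z\<bar> \<le> real J" using real_arch_simple by blast
    define E where "E = exp (pi / 2 * (\<bar>Im z\<bar> + 1))"
    define M where "M j = (2 ^ (2 * m + 1) * C64 * 8 powr (- Re z + 1) * E) * (1/2) ^ j" for j :: nat
    have C0: "C64 \<ge> 0" unfolding C64_def by (intro suminf_nonneg summable_64) auto
    have "summable M" unfolding M_def by (intro summable_mult summable_geometric) auto
    moreover have "\<forall>\<^sub>F j in sequentially. \<forall>s\<in>cball z d. norm (cc s j * f (s + of_nat j + 1)) \<le> M j"
    proof (rule eventually_sequentiallyI[of J], intro ballI)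
      fix j s assume jJ: "J \<le> j" and s: "s \<in> cball z d"
      have Rs: "Re s \<ge> Re z - 1" using cb(1)[OF s] d1 by linarith
      have Ru: "Re (s + of_nat j + 1) \<ge> Re z + real j" using Rs by simp
      have "real J \<le> real j" using jJ by simp
      hence Ru2: "2 < Re (s + of_nat j + 1)" using Rs J by simp
      have fT: "f (s + of_nat j + 1) = (- s - of_nat j) * Gs a (s + of_nat j + 1)"
        using f(2)[OF Ru2] by (simp add: Ts_def algebra_simps)
      have n1: "norm (cc s j) \<le> 2 ^ (m + Suc j)"
      proof -
        have "norm (1 - s) \<le> real m" using cb(4)[OF s] m norm_ge_zero[of z] by linarith
        hence "norm ((1 - s) gchoose Suc j) \<le> 2 ^ (m + Suc j)" by (rule norm_gchoose_le2)
        moreover have "norm (cc s j) \<le> norm ((1 - s) gchoose Suc j)"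
        proof -
          have "norm ((1 - s) gchoose Suc j) / real (j+2) \<le> norm ((1 - s) gchoose Suc j) / 1"
            by (rule divide_left_mono) auto
          thus ?thesis unfolding cc_def norm_divide norm_of_nat by simp
        qed
        ultimately show ?thesis by linarith
      qed
      have n2: "norm (- s - of_nat j) \<le> 2 ^ (m + j)"
      proof -
        have "norm (- s - of_nat j) \<le> norm s + real j"
          using norm_triangle_ineq4[of "-s" "of_nat j"] by simp
        also have "\<dots> \<le> real (m + j)" using cb(3)[OF s] m norm_ge_zero[of "1 - z"] by (simp only: of_nat_add)
        also have "\<dots> \<le> 2 ^ (m + j)" using less_exp[of "m + j"]
          by (metis less_imp_le of_nat_le_iff of_nat_numeral of_nat_power)
        finally show ?thesis .
      qed
      have n3: "norm (Gs a (s + of_nat j + 1)) \<le> C64 * (8 powr (- Re z + 1) * (1/8)^j) * E"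
      proof -
        have "norm (Gs a (s + of_nat j + 1)) \<le> C64 * 8 powr (- Re (s + of_nat j + 1)) * EE (s + of_nat j + 1)"
          using G_bound[OF a, of "s + of_nat j + 1"] Ru2 by linarith
        also have "8 powr (- Re (s + of_nat j + 1)) \<le> 8 powr (- Re z + 1 + - real j)"
          using Rs by (intro powr_mono) auto
        also have "8 powr (- Re z + 1 + - real j) = 8 powr (- Re z + 1) * 8 powr (- real j)"
          by (rule powr_add)
        also have "8 powr (- real j) = (1/8::real)^j"
          by (simp add: powr_minus powr_realpow power_one_over inverse_eq_divide)
        also have "EE (s + of_nat j + 1) \<le> E"
          unfolding EE_def E_def using cb(2)[OF s] by simp
        finally show ?thesis using C0 by (simp add: mult_left_mono mult_right_mono EE_def)
      qed
      have "norm (cc s j * f (s + of_nat j + 1)) = norm (cc s j) * norm (- s - of_nat j) * norm (Gs a (s + of_nat j + 1))"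
        by (simp add: fT norm_mult)
      also have "\<dots> \<le> 2 ^ (m + Suc j) * 2 ^ (m + j) * (C64 * (8 powr (- Re z + 1) * (1/8)^j) * E)"
        by (intro mult_mono n1 n2 n3) auto
      also have "\<dots> = M j"
      proof -
        have h: "(1/8::real)^j * 2^j * 2^j = (1/2)^j"
        proof -
          have "(1/8*2*2::real)^j = (1/2)^j" by simp
          thus ?thesis by (simp only: power_mult_distrib)
        qed
        have "(2::real) ^ (m + Suc j) * 2 ^ (m + j) * (1/8)^j = (2^m*2^m*2) * ((1/8)^j * 2^j * 2^j)"
          by (simp only: power_add power_Suc mult_ac)
        also have "\<dots> = 2 ^ (2 * m + 1) * (1/2) ^ j" by (simp only: h mult_2 power_add power_one_right)
        finally have "(2::real) ^ (m + Suc j) * 2 ^ (m + j) * (1/8)^j = 2 ^ (2 * m + 1) * (1/2) ^ j" .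
        thus ?thesis unfolding M_def by (simp add: mult_ac)
      qed
      finally show "norm (cc s j * f (s + of_nat j + 1)) \<le> M j" .
    qed
    ultimately show "\<exists>d M. 0 < d \<and> cball z d \<subseteq> \<Omega> \<and> summable M \<and>
       (\<forall>\<^sub>F n in sequentially. \<forall>x\<in>cball z d. norm (cc x n * f (x + of_nat n + 1)) \<le> M n)"
      using d0 sub by blast
  qed
  thus "g holomorphic_on {s. 2 - real (Suc K) < Re s}"
    unfolding g_def \<Omega>_def[symmetric] by (intro holomorphic_intros)
qed

lemma T_strips:
  fixes a :: complex
  assumes a: "Re a \<ge> 8"
  shows "\<exists>f. f holomorphic_on {s. 2 - real K < Re s} \<and> (\<forall>s. 2 < Re s \<longrightarrow> f s = Ts a s)"
proof (induction K)
  case 0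
  have "Ts a holomorphic_on {s. 2 < Re s}"
    unfolding Ts_def[abs_def] by (intro holomorphic_intros G_holo[OF a])
  thus ?case by auto
next
  case (Suc K)
  then obtain f where f: "f holomorphic_on {s. 2 - real K < Re s}" "\<And>s. 2 < Re s \<Longrightarrow> f s = Ts a s"
    by blast
  show ?case using T_strip_step[OF a f] by blast
qed

lemma T_entire:
  fixes a :: complex
  assumes a: "Re a \<ge> 8"
  shows "\<exists>T. T holomorphic_on UNIV \<and> (\<forall>s. 2 < Re s \<longrightarrow> T s = Ts a s)"
proof -
  define \<Omega> where "\<Omega> K = {s. 2 - real K < Re s}" for K :: nat
  have "\<forall>K. \<exists>f. f holomorphic_on \<Omega> K \<and> (\<forall>s. 2 < Re s \<longrightarrow> f s = Ts a s)"
    unfolding \<Omega>_def using T_strips[OF a] by blast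
  then obtain F where F: "\<And>K. F K holomorphic_on \<Omega> K" "\<And>K s. 2 < Re s \<Longrightarrow> F K s = Ts a s"
    by metis
  have opn: "open (\<Omega> K)" for K unfolding \<Omega>_def by (simp add: open_halfspace_Re_gt)
  have agree: "F K1 s = F K2 s" if "s \<in> \<Omega> K1" "s \<in> \<Omega> K2" for K1 K2 s
  proof -
    define L where "L = min K1 K2"
    have sL: "s \<in> \<Omega> L" using that unfolding \<Omega>_def L_def by (auto simp: min_def)
    have sub: "\<Omega> L \<subseteq> \<Omega> K1" "\<Omega> L \<subseteq> \<Omega> K2" unfolding \<Omega>_def L_def by auto
    show ?thesis
    proof (rule analytic_continuation_open[where s = "{s. 2 < Re s}" and s' = "\<Omega> L" and f = "F K1" and g = "F K2" and z = s])
      show "open {s. 2 < Re s}" by (simp add: open_halfspace_Re_gt)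
      show "{s. 2 < Re s} \<noteq> {}" by (auto intro: exI[of _ 3])
      show "connected (\<Omega> L)" unfolding \<Omega>_def by (intro convex_connected convex_halfspace_Re_gt)
      show "{s. 2 < Re s} \<subseteq> \<Omega> L" unfolding \<Omega>_def by auto
      show "F K1 holomorphic_on \<Omega> L" by (rule holomorphic_on_subset[OF F(1) sub(1)])
      show "F K2 holomorphic_on \<Omega> L" by (rule holomorphic_on_subset[OF F(1) sub(2)])
      show "F K1 z = F K2 z" if "z \<in> {s. 2 < Re s}" for z using that F(2) by simp
    qed (use opn sL in auto)
  qed
  define Kof where "Kof s = nat \<lceil>2 - Re s\<rceil> + 1" for s
  have inK: "s \<in> \<Omega> (Kof s)" for s
  proof -
    have "2 - Re s \<le> real (nat \<lceil>2 - Re s\<rceil>)" by linarith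
    thus ?thesis unfolding \<Omega>_def Kof_def by simp
  qed
  define T where "T s = F (Kof s) s" for s
  have TF: "T s = F K s" if "s \<in> \<Omega> K" for s K unfolding T_def using agree[OF inK that] .
  have "T holomorphic_on \<Omega> K" for K by (rule holomorphic_transform[OF F(1)]) (use TF in auto)
  hence "T field_differentiable at s" for s
    using holomorphic_on_imp_differentiable_at[OF _ opn inK] by blast
  hence "T holomorphic_on UNIV" by (auto simp: holomorphic_on_def field_differentiable_at_within)
  moreover have "T s = Ts a s" if "2 < Re s" for s
  proof -
    have "s \<in> \<Omega> 0" using that by (simp add: \<Omega>_def)
    thus ?thesis using TF F(2)[OF that] by simp
  qed
  ultimately show ?thesis by blast
qed

lemma G_cont:
  fixes a :: complex
  assumes a: "Re a \<ge> 8"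
  shows "\<exists>g. g meromorphic_on UNIV \<and> (\<forall>s. 2 < Re s \<longrightarrow> g s = Gs a s)"
proof -
  obtain T where T: "T holomorphic_on UNIV" "\<And>s. 2 < Re s \<Longrightarrow> T s = Ts a s" using T_entire[OF a] by blast
  have "T analytic_on UNIV" using T by (simp add: analytic_on_open)
  hence "(\<lambda>s. T s / (1 - s)) meromorphic_on UNIV"
    by (intro meromorphic_intros analytic_on_imp_meromorphic_on analytic_intros)
  moreover have "T s / (1 - s) = Gs a s" if "2 < Re s" for s
  proof -
    have "1 - s \<noteq> 0" using that by auto
    thus ?thesis using T(2)[OF that] by (simp add: Ts_def)
  qed
  ultimately show ?thesis by blast
qed

lemma hurwitz_summable:
  fixes D s :: complex
  assumes D: "Re D > 0" and s: "Re s \<ge> 2"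
  shows "summable (\<lambda>n. norm ((of_nat n + D) powr (-s)))"
proof -
  have "summable (\<lambda>n. norm ((of_nat n + (D + 8)) powr (-s)))"
    by (rule G_summable) (use D s in auto)
  hence "summable (\<lambda>n. norm ((of_nat (n + 8) + D) powr (-s)))" by (simp add: add_ac)
  thus ?thesis by (subst (asm) summable_iff_shift)
qed

lemma hurwitz_cont:
  fixes D :: complex
  assumes D: "Re D > 0"
  shows "\<exists>h. h meromorphic_on UNIV \<and> (\<forall>s. 2 < Re s \<longrightarrow> h s = (\<Sum>n. (of_nat n + D) powr (-s)))"
proof -
  obtain g where g: "g meromorphic_on UNIV" "\<And>s. 2 < Re s \<Longrightarrow> g s = Gs (D + 8) s"
    using G_cont[of "D + 8"] D by auto
  define h where "h s = (\<Sum>n<8. (of_nat n + D) powr (-s)) + g s" for s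
  have "(\<lambda>s. (\<Sum>n<8. (of_nat n + D) powr (-s))) analytic_on UNIV"
    by (intro analytic_intros) (use D in \<open>auto simp: complex_nonpos_Reals_iff\<close>)
  hence "h meromorphic_on UNIV" unfolding h_def
    by (intro meromorphic_intros analytic_on_imp_meromorphic_on g)
  moreover have "h s = (\<Sum>n. (of_nat n + D) powr (-s))" if "2 < Re s" for s
  proof -
    have sm: "summable (\<lambda>n. (of_nat n + D) powr (-s))"
      using summable_norm_cancel[OF hurwitz_summable[OF D]] that by simp
    have "(\<Sum>n. (of_nat n + D) powr (-s)) = (\<Sum>n. (of_nat (n + 8) + D) powr (-s)) + (\<Sum>n<8. (of_nat n + D) powr (-s))"
      by (rule suminf_split_initial_segment[OF sm])
    also have "(\<Sum>n. (of_nat (n + 8) + D) powr (-s)) = Gs (D + 8) s"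
      unfolding Gs_def by (simp add: add_ac)
    finally show ?thesis using g(2)[OF that] by (simp add: h_def)
  qed
  ultimately show ?thesis by blast
qed

definition polyfun :: "(nat \<Rightarrow> complex) \<Rightarrow> bool" where
  "polyfun f \<longleftrightarrow> (\<exists>p. \<forall>N. f N = poly p (of_nat N))"

lemma polyfun_const: "polyfun (\<lambda>N. c)"
  unfolding polyfun_def by (intro exI[of _ "[:c:]"]) simp

lemma polyfun_id: "polyfun (\<lambda>N. of_nat N)"
  unfolding polyfun_def by (intro exI[of _ "[:0, 1:]"]) simp

lemma polyfun_add: "polyfun f \<Longrightarrow> polyfun g \<Longrightarrow> polyfun (\<lambda>N. f N + g N)"
  unfolding polyfun_def by (metis poly_add)

lemma polyfun_diff: "polyfun f \<Longrightarrow> polyfun g \<Longrightarrow> polyfun (\<lambda>N. f N - g N)"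
  unfolding polyfun_def by (metis poly_diff)

lemma polyfun_mult: "polyfun f \<Longrightarrow> polyfun g \<Longrightarrow> polyfun (\<lambda>N. f N * g N)"
  unfolding polyfun_def by (metis poly_mult)

lemma polyfun_power: "polyfun f \<Longrightarrow> polyfun (\<lambda>N. f N ^ k)"
  by (induction k) (auto intro: polyfun_mult polyfun_const)

lemma polyfun_sum: "finite I \<Longrightarrow> (\<And>i. i \<in> I \<Longrightarrow> polyfun (f i)) \<Longrightarrow> polyfun (\<lambda>N. \<Sum>i\<in>I. f i N)"
  by (induction I rule: finite_induct) (auto intro: polyfun_add polyfun_const)

lemma polyfun_powsum: "polyfun (\<lambda>N. \<Sum>i\<le>N. (of_nat i :: complex) ^ k)"
proof (induction k rule: less_induct)
  case (less k)
  define S where "S b N = (\<Sum>i\<le>N. (of_nat i :: complex) ^ b)" for b N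
  have key: "(of_nat N + 1) ^ Suc k = of_nat (Suc k) * S k N + (\<Sum>b<k. of_nat (Suc k choose b) * S b N)" for N
  proof -
    have "(of_nat N + 1 :: complex) ^ Suc k = (\<Sum>i\<le>N. (of_nat (Suc i)) ^ Suc k - (of_nat i) ^ Suc k)"
    proof -
      have "(\<Sum>i\<le>N. (of_nat (Suc i) :: complex) ^ Suc k - (of_nat i) ^ Suc k) =
            - (\<Sum>i\<le>N. (of_nat i :: complex) ^ Suc k - (of_nat (Suc i)) ^ Suc k)"
        by (simp add: sum_negf[symmetric])
      also have "\<dots> = (of_nat (Suc N)) ^ Suc k"
        by (subst sum_telescope[of "\<lambda>i. (of_nat i :: complex) ^ Suc k"]) simp
      finally show ?thesis by (simp add: add.commute)
    qed
    also have "\<dots> = (\<Sum>i\<le>N. \<Sum>b\<le>k. of_nat (Suc k choose b) * (of_nat i :: complex) ^ b)"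
    proof (rule sum.cong[OF refl])
      fix i
      have "(of_nat (Suc i) :: complex) ^ Suc k = (\<Sum>b\<le>Suc k. of_nat (Suc k choose b) * of_nat i ^ b)"
        using binomial_ring[of "of_nat i :: complex" 1 "Suc k"] by (simp add: add.commute)
      also have "\<dots> = (\<Sum>b\<le>k. of_nat (Suc k choose b) * of_nat i ^ b) + of_nat i ^ Suc k"
        by (subst sum.atMost_Suc) simp
      finally show "(of_nat (Suc i) :: complex) ^ Suc k - of_nat i ^ Suc k =
                    (\<Sum>b\<le>k. of_nat (Suc k choose b) * of_nat i ^ b)" by simp
    qed
    also have "\<dots> = (\<Sum>b\<le>k. of_nat (Suc k choose b) * S b N)"
      unfolding S_def by (subst sum.swap) (simp add: sum_distrib_left)
    also have "\<dots> = (\<Sum>b<k. of_nat (Suc k choose b) * S b N) + of_nat (Suc k) * S k N"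
      by (simp only: lessThan_Suc_atMost[symmetric] sum.lessThan_Suc binomial_Suc_n)
    finally show ?thesis by simp
  qed
  have eq: "S k N = ((of_nat N + 1) ^ Suc k - (\<Sum>b<k. of_nat (Suc k choose b) * S b N)) / of_nat (Suc k)" for N
  proof -
    have "(of_nat (Suc k) :: complex) \<noteq> 0" by (simp only: of_nat_eq_0_iff)
    thus ?thesis using key[of N] by (simp add: field_simps)
  qed
  have "polyfun (\<lambda>N. ((of_nat N + 1) ^ Suc k - (\<Sum>b<k. of_nat (Suc k choose b) * S b N)) * (1 / of_nat (Suc k)))"
    by (intro polyfun_mult polyfun_diff polyfun_power polyfun_add polyfun_id polyfun_const polyfun_sum)
       (auto simp: S_def intro!: less.IH)
  thus ?case unfolding S_def[symmetric] using eq by (simp add: divide_inverse)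
qed

lemma polyfun_partial_sum:
  assumes "polyfun f"
  shows "polyfun (\<lambda>N. \<Sum>i\<le>N. f i)"
proof -
  obtain p where p: "\<And>N. f N = poly p (of_nat N)" using assms by (auto simp: polyfun_def)
  have "(\<Sum>i\<le>N. f i) = (\<Sum>j\<le>degree p. coeff p j * (\<Sum>i\<le>N. (of_nat i :: complex) ^ j))" for N
    by (simp add: p poly_altdef sum_distrib_left) (rule sum.swap)
  moreover have "polyfun (\<lambda>N. \<Sum>j\<le>degree p. coeff p j * (\<Sum>i\<le>N. (of_nat i :: complex) ^ j))"
    by (intro polyfun_sum polyfun_mult polyfun_const polyfun_powsum) auto
  ultimately show ?thesis by simp
qed

lemma polyfun_shift_form:
  assumes "polyfun f"
  shows "\<exists>r J. \<forall>N. f N = (\<Sum>j\<le>J. r j * (of_nat N + D) ^ j)"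
proof -
  obtain p where p: "\<And>N. f N = poly p (of_nat N)" using assms by (auto simp: polyfun_def)
  define q where "q = pcompose p [:-D, 1:]"
  have "f N = poly q (of_nat N + D)" for N by (simp add: q_def poly_pcompose p)
  thus ?thesis by (intro exI[of _ "coeff q"] exI[of _ "degree q"]) (simp add: poly_altdef)
qed

definition Fset :: "nat \<Rightarrow> nat \<Rightarrow> (nat \<Rightarrow> nat) set" where
  "Fset P N = {m \<in> PiE {..<P} (\<lambda>_. UNIV). (\<Sum>p<P. m p) = N}"

definition QQ :: "nat \<Rightarrow> (nat \<Rightarrow> nat) \<Rightarrow> (nat \<Rightarrow> complex) \<Rightarrow> nat \<Rightarrow> complex" where
  "QQ P R d N = (\<Sum>m\<in>Fset P N. \<Prod>p<P. (of_nat (m p) + d p) ^ R p)"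

lemma Fset_sub: "Fset P N \<subseteq> PiE {..<P} (\<lambda>_. {..N})"
proof
  fix m assume m: "m \<in> Fset P N"
  have "m p \<le> N" if "p < P" for p
  proof -
    have "m p \<le> (\<Sum>q<P. m q)" using that by (intro member_le_sum) auto
    thus ?thesis using m by (simp add: Fset_def)
  qed
  thus "m \<in> PiE {..<P} (\<lambda>_. {..N})" using m by (auto simp: Fset_def PiE_iff)
qed

lemma finite_Fset: "finite (Fset P N)"
  by (rule finite_subset[OF Fset_sub]) (simp add: finite_PiE)

lemma card_Fset: "card (Fset P N) \<le> (N + 1) ^ P"
proof -
  have "card (Fset P N) \<le> card (PiE {..<P} (\<lambda>_. {..N}))"
    by (rule card_mono[OF _ Fset_sub]) (simp add: finite_PiE)
  also have "\<dots> = (N + 1) ^ P" by (simp add: card_PiE)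
  finally show ?thesis .
qed

lemma QQ_0: "QQ 0 R d N = (if N = 0 then 1 else 0)"
proof -
  have "Fset 0 N = (if N = 0 then {\<lambda>_. undefined} else {})"
    by (auto simp: Fset_def PiE_iff extensional_def)
  thus ?thesis by (simp add: QQ_def)
qed

lemma QQ_Suc:
  "QQ (Suc P) R d N = (\<Sum>i\<le>N. QQ P R d i * (of_nat (N - i) + d P) ^ R P)"
proof -
  define S where "S = Sigma {..N} (\<lambda>i. Fset P i)"
  define g where "g = (\<lambda>(i, m'). (\<Prod>p<P. (of_nat (m' p) + d p) ^ R p) * (of_nat (N - i) + d P) ^ R P)"
  have "(\<Sum>m\<in>Fset (Suc P) N. \<Prod>p<Suc P. (of_nat (m p) + d p) ^ R p) = sum g S"
  proof (rule sum.reindex_bij_witness[symmetric, where j = "\<lambda>(i, m'). m'(P := N - i)"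
                 and i = "\<lambda>m. (N - m P, restrict m {..<P})"])
    fix a assume a: "a \<in> S"
    obtain i m' where a_eq: "a = (i, m')" by (cases a)
    have i: "i \<le> N" and m': "m' \<in> PiE {..<P} (\<lambda>_. UNIV)" "(\<Sum>p<P. m' p) = i"
      using a by (auto simp: S_def a_eq Fset_def)
    have ext: "m' q = undefined" if "q \<notin> {..<P}" for q
      using m'(1) that by (auto simp: PiE_iff extensional_def)
    have r: "restrict (m'(P := N - i)) {..<P} = m'"
    proof
      fix x show "restrict (m'(P := N - i)) {..<P} x = m' x"
        using ext[of x] by (cases "x < P") (auto simp: restrict_def)
    qed
    show "(\<lambda>m. (N - m P, restrict m {..<P})) ((\<lambda>(i, m'). m'(P := N - i)) a) = a"
      using i r by (simp add: a_eq)
    have "(\<Sum>p<P. (m'(P := N - i)) p) = (\<Sum>p<P. m' p)" by (rule sum.cong) auto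
    hence sumeq: "(\<Sum>p<P. (m'(P := N - i)) p) = i" using m'(2) by simp
    show "(\<lambda>(i, m'). m'(P := N - i)) a \<in> Fset (Suc P) N"
      using ext i sumeq by (auto simp: a_eq Fset_def PiE_iff extensional_def)
    have prodeq: "(\<Prod>p<P. (of_nat ((m'(P := N - i)) p) + d p) ^ R p) = (\<Prod>p<P. (of_nat (m' p) + d p) ^ R p)"
      by (intro prod.cong) auto
    show "(\<Prod>p<Suc P. (of_nat (((\<lambda>(i, m'). m'(P := N - i)) a) p) + d p) ^ R p) = g a"
      using prodeq by (simp add: a_eq g_def)
  next
    fix b assume b: "b \<in> Fset (Suc P) N"
    have b1: "b \<in> PiE {..<Suc P} (\<lambda>_. UNIV)" and b2: "(\<Sum>p<Suc P. b p) = N"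
      using b by (auto simp: Fset_def)
    have bP: "b P \<le> N" using b2 by simp
    have ext: "b q = undefined" if "q \<notin> {..<Suc P}" for q
      using b1 that by (auto simp: PiE_iff extensional_def)
    have r: "(restrict b {..<P})(P := N - (N - b P)) = b"
    proof
      fix x show "((restrict b {..<P})(P := N - (N - b P))) x = b x"
        using ext[of x] bP by (cases "x < P"; cases "x = P") (auto simp: restrict_def)
    qed
    show "(\<lambda>(i, m'). m'(P := N - i)) ((\<lambda>m. (N - m P, restrict m {..<P})) b) = b"
      using r by simp
    have "(\<Sum>p<P. restrict b {..<P} p) = N - b P" using b2 by simp
    thus "(\<lambda>m. (N - m P, restrict m {..<P})) b \<in> S"
      by (auto simp: S_def Fset_def)
  qed
  also have "sum g S = (\<Sum>i\<le>N. \<Sum>m'\<in>Fset P i. g (i, m'))"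
    unfolding S_def using sum.Sigma[of "{..N}" "Fset P" "\<lambda>i m'. g (i, m')"] by (simp add: finite_Fset)
  also have "\<dots> = (\<Sum>i\<le>N. QQ P R d i * (of_nat (N - i) + d P) ^ R P)"
    by (simp add: g_def QQ_def sum_distrib_right)
  finally show ?thesis by (simp add: QQ_def)
qed

lemma polyfun_uminus: "polyfun f \<Longrightarrow> polyfun (\<lambda>N. - f N)"
  unfolding polyfun_def by (metis poly_minus)

lemma polyfun_QQ:
  assumes "P \<ge> 1"
  shows "polyfun (QQ P R d)"
  using assms
proof (induction P)
  case 0 thus ?case by simp
next
  case (Suc P)
  show ?case
  proof (cases "P = 0")
    case True
    have "QQ (Suc 0) R d N = (of_nat N + d 0) ^ R 0" for N
    proof -
      have "QQ (Suc 0) R d N = (\<Sum>i\<le>N. (if i = 0 then 1 else 0) * (of_nat (N - i) + d 0) ^ R 0)"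
        by (simp add: QQ_Suc QQ_0)
      also have "\<dots> = (\<Sum>i\<le>N. if i = 0 then (of_nat (N - i) + d 0) ^ R 0 else 0)"
        by (intro sum.cong) auto
      also have "\<dots> = (of_nat N + d 0) ^ R 0"
        by (subst sum.delta) auto
      finally show ?thesis .
    qed
    moreover have "polyfun (\<lambda>N. (of_nat N + d 0) ^ R 0)"
      by (intro polyfun_power polyfun_add polyfun_id polyfun_const)
    ultimately show ?thesis using True by (simp add: fun_eq_iff[symmetric] polyfun_def)
  next
    case False
    hence IH: "polyfun (QQ P R d)" using Suc.IH by simp
    have eq: "QQ (Suc P) R d N = (\<Sum>l\<le>R P. of_nat (R P choose l) * (of_nat N + d P) ^ l *
                 (\<Sum>i\<le>N. QQ P R d i * (- of_nat i) ^ (R P - l)))" for N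
    proof -
      have "QQ (Suc P) R d N = (\<Sum>i\<le>N. QQ P R d i * ((of_nat N + d P) + (- of_nat i)) ^ R P)"
        unfolding QQ_Suc by (intro sum.cong refl) (auto simp: of_nat_diff algebra_simps)
      also have "\<dots> = (\<Sum>i\<le>N. \<Sum>l\<le>R P. QQ P R d i * (of_nat (R P choose l) * (of_nat N + d P) ^ l * (- of_nat i) ^ (R P - l)))"
        by (intro sum.cong refl) (simp only: binomial_ring sum_distrib_left mult.assoc)
      also have "\<dots> = (\<Sum>l\<le>R P. \<Sum>i\<le>N. QQ P R d i * (of_nat (R P choose l) * (of_nat N + d P) ^ l * (- of_nat i) ^ (R P - l)))"
        by (rule sum.swap)
      also have "\<dots> = (\<Sum>l\<le>R P. of_nat (R P choose l) * (of_nat N + d P) ^ l *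
                 (\<Sum>i\<le>N. QQ P R d i * (- of_nat i) ^ (R P - l)))"
        by (simp add: sum_distrib_left mult_ac)
      finally show ?thesis .
    qed
    have "polyfun (\<lambda>N. \<Sum>l\<le>R P. of_nat (R P choose l) * (of_nat N + d P) ^ l *
                 (\<Sum>i\<le>N. QQ P R d i * (- of_nat i) ^ (R P - l)))"
      by (intro polyfun_sum polyfun_mult polyfun_const polyfun_power polyfun_add polyfun_id
                polyfun_partial_sum IH)
         (auto intro: polyfun_mult polyfun_power polyfun_id polyfun_const IH polyfun_uminus)
    thus ?thesis using eq by (simp add: fun_eq_iff[symmetric])
  qed
qed

lemma meromorphic_shift:
  assumes "h meromorphic_on UNIV"
  shows "(\<lambda>s. h (s - c)) meromorphic_on UNIV"
  by (rule meromorphic_on_compose[OF assms]) (auto intro!: analytic_intros)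

lemma norm_pow_powr:
  fixes z s :: complex and L :: nat
  assumes "z \<noteq> 0"
  shows "norm z ^ L * norm (z powr (-s)) = norm (z powr (-(s - of_nat L)))"
proof -
  have "z powr (-(s - of_nat L)) = z powr (of_nat L + - s)" by simp
  also have "\<dots> = z powr (of_nat L) * z powr (-s)" by (rule powr_add)
  also have "\<dots> = z ^ L * z powr (-s)" using assms by (simp add: powr_nat')
  finally show ?thesis by (simp add: norm_mult norm_power)
qed

lemma pow_powr:
  fixes z s :: complex and j :: nat
  assumes "z \<noteq> 0"
  shows "z ^ j * z powr (-s) = z powr (-(s - of_nat j))"
proof -
  have "z powr (-(s - of_nat j)) = z powr (of_nat j + - s)" by simp
  also have "\<dots> = z powr (of_nat j) * z powr (-s)" by (rule powr_add)
  also have "\<dots> = z ^ j * z powr (-s)" using assms by (simp add: powr_nat')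
  finally show ?thesis by simp
qed

theorem barnes1_cont:
  fixes P :: nat and R :: "nat \<Rightarrow> nat" and d :: "nat \<Rightarrow> complex"
  assumes P: "P \<ge> 1" and d: "\<And>p. p < P \<Longrightarrow> Re (d p) > 0"
  shows "\<exists>\<sigma> f. f meromorphic_on UNIV \<and> (\<forall>s. Re s > \<sigma> \<longrightarrow>
           (\<lambda>n. (\<Prod>p<P. (of_nat (n p) + d p) ^ R p) * (\<Sum>p<P. of_nat (n p) + d p) powr (- s))
              summable_on PiE {..<P} (\<lambda>_. UNIV) \<and>
           f s = barnes_series P R s d (\<lambda>_. 1))"
proof -
  define D where "D = (\<Sum>p<P. d p)"
  have ReD: "Re D > 0" unfolding D_def Re_sum using P d by (intro sum_pos) (auto simp: lessThan_empty_iff)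
  obtain r J where rJ: "\<And>N. QQ P R d N = (\<Sum>j\<le>J. r j * (of_nat N + D) ^ j)"
    using polyfun_shift_form[OF polyfun_QQ[OF P], of R d D] by blast
  obtain h where h: "h meromorphic_on UNIV" "\<And>s. 2 < Re s \<Longrightarrow> h s = (\<Sum>n. (of_nat n + D) powr (-s))"
    using hurwitz_cont[OF ReD] by blast
  define RR where "RR = (\<Sum>p<P. R p)"
  define L where "L = P + RR"
  define A where "A = (\<Sum>p<P. norm (d p)) + 1"
  define \<delta> where "\<delta> = min (Re D) 1"
  define c where "c = A / \<delta>"
  define f where "f s = (\<Sum>j\<le>J. r j * h (s - of_nat j))" for s
  have A1: "A \<ge> 1" unfolding A_def by (simp add: sum_nonneg)
  have \<delta>0: "\<delta> > 0" "\<delta> \<le> 1" using ReD by (auto simp: \<delta>_def)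
  have c1: "c \<ge> 1" using A1 \<delta>0 by (simp add: c_def field_simps)
  have fmero: "f meromorphic_on UNIV" unfolding f_def
    by (intro meromorphic_on_sum meromorphic_on_mult meromorphic_on_const meromorphic_shift h(1))
  have zD: "of_nat N + D \<noteq> 0" for N using ReD by (auto simp: complex_eq_iff)
  have k1: "(\<Sum>p<P. of_nat (n p) + d p) = of_nat N + D" if "n \<in> Fset P N" for n N
    using that by (simp add: Fset_def sum.distrib D_def flip: of_nat_sum)
  have k2: "norm (\<Prod>p<P. (of_nat (n p) + d p) ^ R p) \<le> (real N + A) ^ RR" if "n \<in> Fset P N" for n N
  proof -
    have le: "n p \<le> N" if "p < P" for p using Fset_sub[of P N] \<open>n \<in> Fset P N\<close> that by (auto simp: PiE_iff)
    have "norm (\<Prod>p<P. (of_nat (n p) + d p) ^ R p) \<le> (\<Prod>p<P. norm ((of_nat (n p) + d p) ^ R p))"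
      by (rule norm_prod_le)
    also have "\<dots> \<le> (\<Prod>p<P. (real N + A) ^ R p)"
    proof (rule prod_mono, safe)
      fix p assume p: "p < P"
      have "norm (of_nat (n p) + d p) \<le> real (n p) + norm (d p)"
        using norm_triangle_ineq[of "of_nat (n p)" "d p"] by simp
      also have "norm (d p) \<le> (\<Sum>q<P. norm (d q))" using p by (intro member_le_sum) auto
      also have "real (n p) \<le> real N" using le p by simp
      finally have "norm (of_nat (n p) + d p) \<le> real N + A" unfolding A_def by simp
      thus "norm ((of_nat (n p) + d p) ^ R p) \<le> (real N + A) ^ R p"
        by (simp add: norm_power power_mono)
    qed auto
    also have "\<dots> = (real N + A) ^ RR" by (simp add: RR_def power_sum)
    finally show ?thesis .
  qed
  have k3: "real N + A \<le> c * norm (of_nat N + D)" for N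
  proof -
    have "real N + \<delta> \<le> Re (of_nat N + D)" using \<delta>_def by simp
    also have "\<dots> \<le> norm (of_nat N + D)" by (rule complex_Re_le_cmod)
    finally have "real N + \<delta> \<le> norm (of_nat N + D)" .
    hence "c * (real N + \<delta>) \<le> c * norm (of_nat N + D)" using c1 by (intro mult_left_mono) auto
    moreover have "real N + A \<le> c * (real N + \<delta>)"
    proof -
      have "real N \<le> c * real N" using c1 mult_right_mono[of 1 c "real N"] by simp
      moreover have "c * \<delta> = A" using \<delta>0 by (simp add: c_def)
      ultimately show ?thesis by (simp add: distrib_left)
    qed
    ultimately show ?thesis by linarith
  qed
  define \<sigma> where "\<sigma> = real L + real J + 2"
  have main: "(\<lambda>n. (\<Prod>p<P. (of_nat (n p) + d p) ^ R p) * (\<Sum>p<P. of_nat (n p) + d p) powr (- s))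
              summable_on PiE {..<P} (\<lambda>_. UNIV) \<and> f s = barnes_series P R s d (\<lambda>_. 1)"
    if s: "Re s > \<sigma>" for s
  proof -
    define \<phi> where "\<phi> n = (\<Prod>p<P. (of_nat (n p) + d p) ^ R p) * (\<Sum>p<P. of_nat (n p) + d p) powr (- s)"
      for n :: "nat \<Rightarrow> nat"
    have k4: "(\<Sum>n\<in>Fset P N. norm (\<phi> n)) \<le> c ^ L * norm ((of_nat N + D) powr (-(s - of_nat L)))" for N
    proof -
      have "(\<Sum>n\<in>Fset P N. norm (\<phi> n)) \<le> (\<Sum>n\<in>Fset P N. (real N + A) ^ RR * norm ((of_nat N + D) powr (-s)))"
      proof (rule sum_mono)
        fix n assume n: "n \<in> Fset P N"
        show "norm (\<phi> n) \<le> (real N + A) ^ RR * norm ((of_nat N + D) powr (-s))"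
          unfolding \<phi>_def norm_mult k1[OF n] by (intro mult_right_mono k2[OF n]) auto
      qed
      also have "\<dots> = real (card (Fset P N)) * ((real N + A) ^ RR * norm ((of_nat N + D) powr (-s)))"
        by simp
      also have "\<dots> \<le> (real N + A) ^ P * ((real N + A) ^ RR * norm ((of_nat N + D) powr (-s)))"
      proof (rule mult_right_mono)
        have "real (card (Fset P N)) \<le> real ((N + 1) ^ P)" using card_Fset[of P N] by linarith
        also have "\<dots> \<le> (real N + A) ^ P" using A1 by (simp add: power_mono)
        finally show "real (card (Fset P N)) \<le> (real N + A) ^ P" .
      qed (use A1 in auto)
      also have "\<dots> = (real N + A) ^ L * norm ((of_nat N + D) powr (-s))"
        by (simp add: L_def power_add)
      also have "\<dots> \<le> (c * norm (of_nat N + D)) ^ L * norm ((of_nat N + D) powr (-s))"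
        using A1 k3[of N] by (intro mult_right_mono power_mono) auto
      also have "\<dots> = c ^ L * (norm (of_nat N + D) ^ L * norm ((of_nat N + D) powr (-s)))"
        by (simp add: power_mult_distrib)
      also have "\<dots> = c ^ L * norm ((of_nat N + D) powr (-(s - of_nat L)))"
        by (simp add: norm_pow_powr[OF zD])
      finally show ?thesis .
    qed
    have k5: "summable (\<lambda>N. c ^ L * norm ((of_nat N + D) powr (-(s - of_nat L))))"
      by (intro summable_mult hurwitz_summable ReD) (use s in \<open>simp add: \<sigma>_def\<close>)
    define T where "T = Sigma UNIV (Fset P)"
    have bij: "bij_betw (\<lambda>n. (\<Sum>p<P. n p, n)) (PiE {..<P} (\<lambda>_. UNIV)) T"
      by (rule bij_betwI[where g = snd]) (auto simp: T_def Fset_def)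
    have absT: "(\<lambda>x. norm ((\<lambda>(N, n). \<phi> n) x)) summable_on T"
    proof -
      have "(\<lambda>x. norm ((\<lambda>(N, n). \<phi> n) x)) summable_on Sigma UNIV (Fset P)"
      proof (subst Infinite_Sum.abs_summable_on_Sigma_iff, intro conjI ballI)
        show "(\<lambda>y. norm ((\<lambda>(N, n). \<phi> n) (N, y))) summable_on Fset P N" for N
          by (rule summable_on_finite[OF finite_Fset])
        have "(\<lambda>N. norm (\<Sum>\<^sub>\<infinity>y\<in>Fset P N. norm ((\<lambda>(N, n). \<phi> n) (N, y)))) summable_on UNIV"
        proof (rule Infinite_Sum.abs_summable_on_comparison_test')
          show "(\<lambda>N. c ^ L * norm ((of_nat N + D) powr (-(s - of_nat L)))) summable_on UNIV"
            using k5 c1 by (subst summable_on_UNIV_nonneg_real_iff) auto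
          show "norm (\<Sum>\<^sub>\<infinity>y\<in>Fset P N. norm ((\<lambda>(N, n). \<phi> n) (N, y)))
                  \<le> c ^ L * norm ((of_nat N + D) powr (-(s - of_nat L)))" if "N \<in> UNIV" for N
            using k4[of N] by (simp add: finite_Fset sum_nonneg)
        qed
        thus "(\<lambda>N. norm (\<Sum>\<^sub>\<infinity>y\<in>Fset P N. norm ((\<lambda>(N, n). \<phi> n) (N, y)))) summable_on UNIV" .
      qed
      thus ?thesis by (simp add: T_def)
    qed
    have sumT: "(\<lambda>(N, n). \<phi> n) summable_on T" by (rule abs_summable_summable[OF absT])
    have sumPi: "\<phi> summable_on PiE {..<P} (\<lambda>_. UNIV)"
      using summable_on_reindex_bij_betw[OF bij, of "\<lambda>(N, n). \<phi> n"] sumT by simp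
    define q where "q N = QQ P R d N * (of_nat N + D) powr (-s)" for N
    have fib: "(\<Sum>\<^sub>\<infinity>n\<in>Fset P N. \<phi> n) = q N" for N
    proof -
      have "(\<Sum>\<^sub>\<infinity>n\<in>Fset P N. \<phi> n) = (\<Sum>n\<in>Fset P N. \<phi> n)" by (simp add: finite_Fset)
      also have "\<dots> = (\<Sum>n\<in>Fset P N. (\<Prod>p<P. (of_nat (n p) + d p) ^ R p) * (of_nat N + D) powr (-s))"
        unfolding \<phi>_def by (intro sum.cong refl) (simp add: k1)
      also have "\<dots> = q N" by (simp add: q_def QQ_def sum_distrib_right)
      finally show ?thesis .
    qed
    have qsum: "q summable_on UNIV"
      using summable_on_Sigma_banach[of "\<lambda>N n. \<phi> n" UNIV "Fset P"] sumT fib by (simp add: T_def)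
    have "barnes_series P R s d (\<lambda>_. 1) = (\<Sum>\<^sub>\<infinity>n\<in>PiE {..<P} (\<lambda>_. UNIV). \<phi> n)"
      by (simp add: barnes_series_def \<phi>_def)
    also have "\<dots> = (\<Sum>\<^sub>\<infinity>(N, n)\<in>T. \<phi> n)"
      using infsum_reindex_bij_betw[OF bij, of "\<lambda>(N, n). \<phi> n"] by simp
    also have "\<dots> = (\<Sum>\<^sub>\<infinity>N. \<Sum>\<^sub>\<infinity>n\<in>Fset P N. \<phi> n)"
      using infsum_Sigma'_banach[of "\<lambda>N n. \<phi> n" UNIV "Fset P"] sumT by (simp add: T_def)
    also have "\<dots> = (\<Sum>\<^sub>\<infinity>N. q N)" by (simp add: fib)
    finally have bs: "barnes_series P R s d (\<lambda>_. 1) = (\<Sum>\<^sub>\<infinity>N. q N)" .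
    have q1: "q sums (\<Sum>\<^sub>\<infinity>N. q N)" by (rule has_sum_imp_sums[OF has_sum_infsum[OF qsum]])
    have q2: "q sums f s"
    proof -
      have qeq: "q N = (\<Sum>j\<le>J. r j * (of_nat N + D) powr (-(s - of_nat j)))" for N
        unfolding q_def rJ sum_distrib_right
        by (intro sum.cong refl) (simp add: mult.assoc pow_powr[OF zD])
      have "(\<lambda>N. \<Sum>j\<le>J. r j * (of_nat N + D) powr (-(s - of_nat j))) sums (\<Sum>j\<le>J. r j * h (s - of_nat j))"
      proof (rule sums_sum, rule sums_mult)
        fix j assume j: "j \<in> {..J}"
        have Rj: "Re (s - of_nat j) > 2" using s j by (simp add: \<sigma>_def)
        have "summable (\<lambda>N. (of_nat N + D) powr (-(s - of_nat j)))"
          using summable_norm_cancel[OF hurwitz_summable[OF ReD, of "s - of_nat j"]] Rj by simp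
        thus "(\<lambda>N. (of_nat N + D) powr (-(s - of_nat j))) sums h (s - of_nat j)"
          using h(2)[OF Rj] by (simp add: summable_sums)
      qed
      moreover have "q = (\<lambda>N. \<Sum>j\<le>J. r j * (of_nat N + D) powr (-(s - of_nat j)))"
        using qeq by (intro ext) 
      ultimately show ?thesis unfolding f_def by simp
    qed
    have "f s = barnes_series P R s d (\<lambda>_. 1)" using sums_unique2[OF q2 q1] bs by simp
    moreover have "\<phi> = (\<lambda>n. (\<Prod>p<P. (of_nat (n p) + d p) ^ R p) * (\<Sum>p<P. of_nat (n p) + d p) powr (- s))"
      by (simp add: \<phi>_def[abs_def])
    ultimately show ?thesis using sumPi by simp
  qed
  show ?thesis using fmero main by blast
qed

lemma mero_eq_cosparse:
  assumes f: "f meromorphic_on UNIV" and g: "g meromorphic_on UNIV"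
    and eq: "\<And>s. Re s > \<sigma> \<Longrightarrow> f s = g s"
  shows "\<forall>\<^sub>\<approx>s. f s = g s"
proof -
  have h: "(\<lambda>s. f s - g s) meromorphic_on UNIV" by (intro meromorphic_intros f g)
  from meromorphic_imp_constant_or_avoid[OF h open_UNIV connected_UNIV, of 0]
  consider "\<forall>\<^sub>\<approx>s. f s - g s = 0" | "\<forall>\<^sub>\<approx>s. f s - g s \<noteq> 0" by blast
  thus ?thesis
  proof cases
    case 1 thus ?thesis by (rule eventually_mono) simp
  next
    case 2
    define x0 where "x0 = complex_of_real (\<sigma> + 1)"
    have "eventually (\<lambda>s. f s - g s \<noteq> 0) (at x0)"
      using 2 by (subst (asm) eventually_cosparse_open_eq) auto
    moreover have "eventually (\<lambda>s. s \<in> {s. \<sigma> < Re s}) (at x0)"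
      by (rule eventually_at_in_open') (auto simp: open_halfspace_Re_gt x0_def)
    ultimately have "eventually (\<lambda>s. False) (at x0)"
      by eventually_elim (use eq in auto)
    thus ?thesis by (simp add: trivial_limit_at)
  qed
qed

lemma finite_halfplane:
  assumes "finite K" "\<And>k. k \<in> K \<Longrightarrow> \<exists>\<sigma>::real. \<forall>s. Re s > \<sigma> \<longrightarrow> Q k s"
  shows "\<exists>\<sigma>::real. \<forall>s. Re s > \<sigma> \<longrightarrow> (\<forall>k\<in>K. Q k s)"
  using assms
proof (induction K rule: finite_induct)
  case empty thus ?case by auto
next
  case (insert x F)
  obtain \<sigma>1 where 1: "\<forall>s. Re s > \<sigma>1 \<longrightarrow> (\<forall>k\<in>F. Q k s)" using insert by auto
  obtain \<sigma>2 where 2: "\<forall>s. Re s > \<sigma>2 \<longrightarrow> Q x s" using insert.prems by auto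
  show ?case using 1 2 by (intro exI[of _ "max \<sigma>1 \<sigma>2"]) auto
qed

lemma barnes_series_cong:
  assumes "\<And>p. p < P \<Longrightarrow> d p = d' p" "\<And>p. p < P \<Longrightarrow> c p = c' p"
  shows "barnes_series P R s d c = barnes_series P R s d' c'"
proof -
  have "(\<Prod>p<P. (of_nat (n p) + d p) ^ R p) * (\<Sum>p<P. c p * (of_nat (n p) + d p)) powr (- s) =
        (\<Prod>p<P. (of_nat (n p) + d' p) ^ R p) * (\<Sum>p<P. c' p * (of_nat (n p) + d' p)) powr (- s)" for n
    using assms by (intro arg_cong2[where f = "\<lambda>x y. x * y powr (-s)"] prod.cong sum.cong) auto
  thus ?thesis unfolding barnes_series_def by simp
qed

lemma barnes_zeta_cong:
  assumes "\<And>p. p < P \<Longrightarrow> d p = d' p" "\<And>p. p < P \<Longrightarrow> c p = c' p"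
  shows "barnes_zeta P R s d c = barnes_zeta P R s d' c'"
proof -
  have "is_barnes_continuation P R d c = is_barnes_continuation P R d' c'"
    unfolding is_barnes_continuation_def[abs_def] using barnes_series_cong[OF assms] by simp
  thus ?thesis unfolding barnes_zeta_def by simp
qed

lemma barnes_zeta_is_cont:
  assumes "\<exists>f. is_barnes_continuation P R d c f"
  shows "is_barnes_continuation P R d c (\<lambda>s. barnes_zeta P R s d c)"
proof -
  have "(\<lambda>s. barnes_zeta P R s d c) = (SOME f. is_barnes_continuation P R d c f)"
    by (simp add: barnes_zeta_def[abs_def])
  thus ?thesis using someI_ex[OF assms] by simp
qed

lemma reindex_identity:
  fixes P :: nat and R :: "nat \<Rightarrow> nat" and d :: "nat \<Rightarrow> complex" and B :: "nat \<Rightarrow> nat"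
    and wpr :: "nat \<Rightarrow> real" and w :: real and s :: complex
  assumes B: "\<And>p. p < P \<Longrightarrow> B p \<ge> 1" and wpos: "w > 0"
    and wB: "\<And>p. p < P \<Longrightarrow> wpr p * real (B p) = w"
    and summ: "\<And>k. k \<in> PiE {..<P} (\<lambda>p. {..<B p}) \<Longrightarrow>
        (\<lambda>m. (\<Prod>p<P. (of_nat (m p) + (d p + of_nat (k p)) / of_nat (B p)) ^ R p) *
             (\<Sum>p<P. of_nat (m p) + (d p + of_nat (k p)) / of_nat (B p)) powr (-s))
          summable_on PiE {..<P} (\<lambda>_. UNIV)"
  shows "barnes_series P R s d (\<lambda>p. complex_of_real (wpr p)) =
         complex_of_real w powr (-s) * (\<Prod>p<P. of_nat (B p) ^ R p) *
         (\<Sum>k\<in>PiE {..<P} (\<lambda>p. {..<B p}). barnes_series P R s (\<lambda>p. (d p + of_nat (k p)) / of_nat (B p)) (\<lambda>_. 1))"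
proof -
  define K where "K = PiE {..<P} (\<lambda>p. {..<B p})"
  define M where "M = PiE {..<P} (\<lambda>_::nat. UNIV :: nat set)"
  define dk where "dk k p = (d p + of_nat (k p)) / of_nat (B p)" for k :: "nat \<Rightarrow> nat" and p
  define \<psi> where "\<psi> k m = (\<Prod>p<P. (of_nat (m p) + dk k p) ^ R p) * (\<Sum>p<P. of_nat (m p) + dk k p) powr (-s)"
    for k m :: "nat \<Rightarrow> nat"
  define \<phi> where "\<phi> n = (\<Prod>p<P. (of_nat (n p) + d p) ^ R p) *
      (\<Sum>p<P. complex_of_real (wpr p) * (of_nat (n p) + d p)) powr (- s)" for n :: "nat \<Rightarrow> nat"
  define C where "C = complex_of_real w powr (-s) * (\<Prod>p<P. of_nat (B p) ^ R p)"
  define hm where "hm = (\<lambda>(k, m). (\<lambda>p. if p < P then B p * m p + k p else undefined))"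
  define gm where "gm = (\<lambda>n. ((\<lambda>p. if p < P then n p mod B p else undefined),
                              (\<lambda>p. if p < P then n p div B p else undefined)))"
  have B0: "B p > 0" if "p < P" for p using B[OF that] by simp
  have bij: "bij_betw hm (K \<times> M) M"
  proof (rule bij_betwI[where g = gm])
    show "hm \<in> K \<times> M \<rightarrow> M" by (auto simp: hm_def M_def PiE_iff extensional_def)
    show "gm \<in> M \<rightarrow> K \<times> M" using B0 by (auto simp: gm_def M_def K_def PiE_iff extensional_def)
    show "gm (hm x) = x" if "x \<in> K \<times> M" for x
    proof -
      obtain k m where x: "x = (k, m)" by (cases x)
      have k: "k \<in> K" and m: "m \<in> M" using that x by auto
      have "(\<lambda>p. if p < P then (B p * m p + k p) mod B p else undefined) = k"
      proof
        fix p show "(if p < P then (B p * m p + k p) mod B p else undefined) = k p"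
          using k by (auto simp: K_def PiE_iff extensional_def)
      qed
      moreover have "(\<lambda>p. if p < P then (B p * m p + k p) div B p else undefined) = m"
      proof
        fix p show "(if p < P then (B p * m p + k p) div B p else undefined) = m p"
          using k m B0 by (auto simp: K_def M_def PiE_iff extensional_def)
      qed
      ultimately show ?thesis by (simp add: x hm_def gm_def cong: if_cong)
    qed
    show "hm (gm n) = n" if "n \<in> M" for n
    proof
      fix p show "hm (gm n) p = n p"
        using that by (auto simp: hm_def gm_def M_def PiE_iff extensional_def)
    qed
  qed
  have key: "\<phi> (hm (k, m)) = C * \<psi> k m" if k: "k \<in> K" for k m
  proof -
    have e1: "of_nat (hm (k, m) p) + d p = of_nat (B p) * (of_nat (m p) + dk k p)" if p: "p < P" for p
    proof -
      have "(of_nat (B p) :: complex) \<noteq> 0" using B0[OF p] by simp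
      thus ?thesis using p by (simp add: hm_def dk_def field_simps)
    qed
    have e2: "complex_of_real (wpr p) * of_nat (B p) = complex_of_real w" if p: "p < P" for p
      using wB[OF p] by (metis of_real_mult of_real_of_nat_eq)
    have "(\<Prod>p<P. (of_nat (hm (k, m) p) + d p) ^ R p) = (\<Prod>p<P. (of_nat (B p) * (of_nat (m p) + dk k p)) ^ R p)"
      by (intro prod.cong refl) (simp add: e1)
    also have "\<dots> = (\<Prod>p<P. of_nat (B p) ^ R p) * (\<Prod>p<P. (of_nat (m p) + dk k p) ^ R p)"
      by (simp add: power_mult_distrib prod.distrib)
    finally have pr: "(\<Prod>p<P. (of_nat (hm (k, m) p) + d p) ^ R p) = (\<Prod>p<P. of_nat (B p) ^ R p) * (\<Prod>p<P. (of_nat (m p) + dk k p) ^ R p)" .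
    have "(\<Sum>p<P. complex_of_real (wpr p) * (of_nat (hm (k, m) p) + d p)) =
          (\<Sum>p<P. complex_of_real w * (of_nat (m p) + dk k p))"
    proof (intro sum.cong refl)
      fix p assume "p \<in> {..<P}"
      hence p: "p < P" by simp
      show "complex_of_real (wpr p) * (of_nat (hm (k, m) p) + d p) = complex_of_real w * (of_nat (m p) + dk k p)"
        unfolding e1[OF p] e2[OF p, symmetric] by (simp add: mult_ac)
    qed
    also have "\<dots> = complex_of_real w * (\<Sum>p<P. of_nat (m p) + dk k p)" by (simp add: sum_distrib_left)
    finally have sm: "(\<Sum>p<P. complex_of_real (wpr p) * (of_nat (hm (k, m) p) + d p)) =
                      complex_of_real w * (\<Sum>p<P. of_nat (m p) + dk k p)" .
    have pw: "(complex_of_real w * (\<Sum>p<P. of_nat (m p) + dk k p)) powr (-s) =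
              complex_of_real w powr (-s) * (\<Sum>p<P. of_nat (m p) + dk k p) powr (-s)"
      by (rule powr_times_real_left) (use wpos in auto)
    show ?thesis unfolding \<phi>_def pr sm pw \<psi>_def C_def by (simp add: mult_ac)
  qed
  have sumKM: "(\<lambda>(k, m). C * \<psi> k m) summable_on Sigma K (\<lambda>_. M)"
  proof (rule abs_summable_summable)
    show "(\<lambda>x. norm ((\<lambda>(k, m). C * \<psi> k m) x)) summable_on Sigma K (\<lambda>_. M)"
    proof (subst Infinite_Sum.abs_summable_on_Sigma_iff, intro conjI ballI)
      fix k assume k: "k \<in> K"
      have "\<psi> k summable_on M"
        using summ[of k] k unfolding K_def M_def \<psi>_def[abs_def] dk_def by simp
      hence "(\<lambda>m. C * \<psi> k m) summable_on M" by (rule summable_on_cmult_right)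
      thus "(\<lambda>y. norm ((\<lambda>(k, m). C * \<psi> k m) (k, y))) summable_on M"
        by (simp add: summable_on_iff_abs_summable_on_complex)
    next
      have "finite K" unfolding K_def by (simp add: finite_PiE)
      thus "(\<lambda>x. norm (\<Sum>\<^sub>\<infinity>y\<in>M. norm ((\<lambda>(k, m). C * \<psi> k m) (x, y)))) summable_on K"
        by (rule summable_on_finite)
    qed
  qed
  have "barnes_series P R s d (\<lambda>p. complex_of_real (wpr p)) = (\<Sum>\<^sub>\<infinity>n\<in>M. \<phi> n)"
    by (simp add: barnes_series_def \<phi>_def M_def)
  also have "\<dots> = (\<Sum>\<^sub>\<infinity>x\<in>K \<times> M. \<phi> (hm x))"
    by (rule infsum_reindex_bij_betw[OF bij, symmetric])
  also have "\<dots> = (\<Sum>\<^sub>\<infinity>(k, m)\<in>K \<times> M. C * \<psi> k m)"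
    by (intro infsum_cong) (auto simp: key)
  also have "\<dots> = (\<Sum>\<^sub>\<infinity>k\<in>K. \<Sum>\<^sub>\<infinity>m\<in>M. C * \<psi> k m)"
    using infsum_Sigma'_banach[OF sumKM] by simp
  also have "\<dots> = (\<Sum>k\<in>K. C * (\<Sum>\<^sub>\<infinity>m\<in>M. \<psi> k m))"
    unfolding K_def by (simp add: finite_PiE infsum_cmult_right' sum_distrib_left)
  also have "\<dots> = C * (\<Sum>k\<in>K. barnes_series P R s (\<lambda>p. (d p + of_nat (k p)) / of_nat (B p)) (\<lambda>_. 1))"
    by (simp add: sum_distrib_left barnes_series_def \<psi>_def dk_def M_def)
  finally show ?thesis by (simp add: C_def K_def)
qed

theorem proposition7p4:
  fixes P :: nat and R :: "nat \<Rightarrow> nat" and d :: "nat \<Rightarrow> complex"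
    and a b :: "nat \<Rightarrow> nat"
  assumes "P \<ge> 1"
    and "\<And>p. p < P \<Longrightarrow> Re (d p) > 0"
    and "\<And>p. p < P \<Longrightarrow> a p > 0 \<and> b p > 0 \<and> coprime (a p) (b p)"
  defines "wp \<equiv> (\<lambda>p. real (a p) / real (b p))"
    and "w \<equiv> real (Lcm (a ` {..<P})) / real (Gcd (b ` {..<P}))"
  defines "\<beta> \<equiv> (\<lambda>p. w / wp p)"
  shows "\<forall>\<^sub>\<approx>s. barnes_zeta P R s d (\<lambda>p. complex_of_real (wp p)) =
      complex_of_real w powr (- s) * (\<Prod>p<P. complex_of_real (\<beta> p) ^ R p) *
      (\<Sum>k \<in> PiE {..<P} (\<lambda>p. {k. real k \<le> \<beta> p - 1}).
          barnes_zeta P R s (\<lambda>p. (d p + of_nat (k p)) / complex_of_real (\<beta> p)) (\<lambda>_. 1))"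
proof -
  note P = assms(1) and dpos = assms(2)
  have apos: "a p > 0" if "p < P" for p using assms(3)[OF that] by blast
  have bpos: "b p > 0" if "p < P" for p using assms(3)[OF that] by blast
  define L where "L = Lcm (a ` {..<P})"
  define G where "G = Gcd (b ` {..<P})"
  have L0: "L > 0"
  proof -
    have "0 \<notin> a ` {..<P}"
    proof
      assume "0 \<in> a ` {..<P}"
      then obtain x where "x < P" "a x = 0" by auto
      with apos[of x] show False by simp
    qed
    hence "L \<noteq> 0" unfolding L_def by (subst Lcm_0_iff_nat) auto
    thus ?thesis by simp
  qed
  have G0: "G > 0"
  proof -
    have "0 < P" using P by simp
    hence b0: "b 0 > 0" by (rule bpos)
    have "b 0 \<in> b ` {..<P}" using \<open>0 < P\<close> by (intro imageI) simp
    hence "\<not> (b ` {..<P} \<subseteq> {0})" using b0 by (metis gr_implies_not0 singletonD subsetD)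
    hence "G \<noteq> 0" unfolding G_def by (simp only: Gcd_0_iff) simp
    thus ?thesis by simp
  qed
  have w_eq: "w = real L / real G" by (simp add: w_def L_def G_def)
  have wpos: "w > 0" using L0 G0 by (simp add: w_eq)
  define B where "B p = (L div a p) * (b p div G)" for p
  have adv: "a p dvd L" if "p < P" for p unfolding L_def using that by (intro dvd_Lcm) auto
  have Gdv: "G dvd b p" if "p < P" for p unfolding G_def using that by (intro Gcd_dvd) auto
  have \<beta>B: "\<beta> p = real (B p)" if p: "p < P" for p
  proof -
    have "real (B p) = (real L / real (a p)) * (real (b p) / real G)"
      unfolding B_def using adv[OF p] Gdv[OF p] by (simp add: real_of_nat_div)
    thus ?thesis using apos[OF p] bpos[OF p] L0 G0 by (simp add: \<beta>_def wp_def w_eq field_simps)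
  qed
  have B1: "B p \<ge> 1" if p: "p < P" for p
  proof -
    have "a p \<le> L" using adv[OF p] L0 by (rule dvd_imp_le)
    hence 1: "L div a p > 0" using apos[OF p] by (simp add: div_greater_zero_iff)
    have "G \<le> b p" using Gdv[OF p] bpos[OF p] by (intro dvd_imp_le) auto
    hence 2: "b p div G > 0" using G0 by (simp add: div_greater_zero_iff)
    show ?thesis using 1 2 by (simp add: B_def Suc_le_eq)
  qed
  have wB: "wp p * real (B p) = w" if p: "p < P" for p
  proof -
    have "w * real (b p) / real (a p) = real (B p)" using \<beta>B[OF p] by (simp add: \<beta>_def wp_def)
    hence "w * real (b p) = real (B p) * real (a p)" using apos[OF p] by (simp add: field_simps)
    thus ?thesis using bpos[OF p] by (simp add: wp_def field_simps)
  qed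
  define K where "K = PiE {..<P} (\<lambda>p. {..<B p})"
  have finK: "finite K" unfolding K_def by (simp add: finite_PiE)
  have Kset: "PiE {..<P} (\<lambda>p. {k. real k \<le> \<beta> p - 1}) = K"
    unfolding K_def
  proof (rule PiE_cong)
    fix p assume "p \<in> {..<P}"
    hence p: "p < P" by simp
    show "{k. real k \<le> \<beta> p - 1} = {..<B p}" using \<beta>B[OF p] by auto
  qed
  define dk where "dk k p = (d p + of_nat (k p)) / of_nat (B p)" for k :: "nat \<Rightarrow> nat" and p
  have dkpos: "Re (dk k p) > 0" if p: "p < P" for k p
  proof -
    have "Re (dk k p) = (Re (d p) + real (k p)) / real (B p)"
      unfolding dk_def by (simp add: Re_divide_of_nat)
    thus ?thesis using dpos[OF p] B1[OF p] by simp
  qed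
  define Z where "Z k s = barnes_zeta P R s (dk k) (\<lambda>_. 1)" for k s
  have each: "\<exists>\<sigma>::real. \<forall>s. Re s > \<sigma> \<longrightarrow>
       ((\<lambda>m. (\<Prod>p<P. (of_nat (m p) + dk k p) ^ R p) * (\<Sum>p<P. of_nat (m p) + dk k p) powr (- s))
            summable_on PiE {..<P} (\<lambda>_. UNIV) \<and> Z k s = barnes_series P R s (dk k) (\<lambda>_. 1))"
    and Zmero: "Z k meromorphic_on UNIV" if k: "k \<in> K" for k
  proof -
    obtain \<sigma> f where f: "f meromorphic_on UNIV"
      "\<And>s. Re s > \<sigma> \<Longrightarrow> (\<lambda>m. (\<Prod>p<P. (of_nat (m p) + dk k p) ^ R p) * (\<Sum>p<P. of_nat (m p) + dk k p) powr (- s))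
            summable_on PiE {..<P} (\<lambda>_. UNIV) \<and> f s = barnes_series P R s (dk k) (\<lambda>_. 1)"
      using barnes1_cont[OF P, of "dk k" R] dkpos by blast
    have "is_barnes_continuation P R (dk k) (\<lambda>_. 1) f"
      unfolding is_barnes_continuation_def using f by blast
    hence cont: "is_barnes_continuation P R (dk k) (\<lambda>_. 1) (Z k)"
      unfolding Z_def[abs_def] by (intro barnes_zeta_is_cont) blast
    then obtain \<sigma>' where \<sigma>': "\<And>s. Re s > \<sigma>' \<Longrightarrow> Z k s = barnes_series P R s (dk k) (\<lambda>_. 1)"
      unfolding is_barnes_continuation_def by blast
    show "Z k meromorphic_on UNIV" using cont unfolding is_barnes_continuation_def by blast
    show "\<exists>\<sigma>::real. \<forall>s. Re s > \<sigma> \<longrightarrow>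
       ((\<lambda>m. (\<Prod>p<P. (of_nat (m p) + dk k p) ^ R p) * (\<Sum>p<P. of_nat (m p) + dk k p) powr (- s))
            summable_on PiE {..<P} (\<lambda>_. UNIV) \<and> Z k s = barnes_series P R s (dk k) (\<lambda>_. 1))"
      using f(2) \<sigma>' by (intro exI[of _ "max \<sigma> \<sigma>'"]) auto
  qed
  obtain \<sigma>1 where \<sigma>1: "\<And>s k. Re s > \<sigma>1 \<Longrightarrow> k \<in> K \<Longrightarrow>
       (\<lambda>m. (\<Prod>p<P. (of_nat (m p) + dk k p) ^ R p) * (\<Sum>p<P. of_nat (m p) + dk k p) powr (- s))
            summable_on PiE {..<P} (\<lambda>_. UNIV) \<and> Z k s = barnes_series P R s (dk k) (\<lambda>_. 1)"
    using finite_halfplane[OF finK, of "\<lambda>k s. (\<lambda>m. (\<Prod>p<P. (of_nat (m p) + dk k p) ^ R p) * (\<Sum>p<P. of_nat (m p) + dk k p) powr (- s))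
            summable_on PiE {..<P} (\<lambda>_. UNIV) \<and> Z k s = barnes_series P R s (dk k) (\<lambda>_. 1)"] each
    by blast
  define F where "F s = complex_of_real w powr (- s) * (\<Prod>p<P. of_nat (B p) ^ R p) * (\<Sum>k\<in>K. Z k s)" for s
  have Fmero: "F meromorphic_on UNIV"
  proof -
    have "(\<lambda>s. complex_of_real w powr (- s)) holomorphic_on UNIV"
      by (intro holomorphic_on_powr_right holomorphic_intros)
    hence "(\<lambda>s. complex_of_real w powr (- s)) meromorphic_on UNIV"
      by (intro analytic_on_imp_meromorphic_on) (simp add: analytic_on_open)
    thus ?thesis unfolding F_def
      by (intro meromorphic_intros meromorphic_on_sum Zmero)
  qed
  have Fser: "F s = barnes_series P R s d (\<lambda>p. complex_of_real (wp p))" if s: "Re s > \<sigma>1" for s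
  proof -
    have "barnes_series P R s d (\<lambda>p. complex_of_real (wp p)) =
         complex_of_real w powr (-s) * (\<Prod>p<P. of_nat (B p) ^ R p) *
         (\<Sum>k\<in>PiE {..<P} (\<lambda>p. {..<B p}). barnes_series P R s (\<lambda>p. (d p + of_nat (k p)) / of_nat (B p)) (\<lambda>_. 1))"
    proof (rule reindex_identity[OF B1 wpos wB])
      fix k assume "k \<in> PiE {..<P} (\<lambda>p. {..<B p})"
      hence "k \<in> K" by (simp add: K_def)
      from \<sigma>1[OF s this] show "(\<lambda>m. (\<Prod>p<P. (of_nat (m p) + (d p + of_nat (k p)) / of_nat (B p)) ^ R p) *
             (\<Sum>p<P. of_nat (m p) + (d p + of_nat (k p)) / of_nat (B p)) powr (-s))
          summable_on PiE {..<P} (\<lambda>_. UNIV)" by (simp add: dk_def)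
    qed auto
    also have "(\<Sum>k\<in>PiE {..<P} (\<lambda>p. {..<B p}). barnes_series P R s (\<lambda>p. (d p + of_nat (k p)) / of_nat (B p)) (\<lambda>_. 1))
             = (\<Sum>k\<in>K. Z k s)"
      unfolding K_def[symmetric] using \<sigma>1[OF s] by (intro sum.cong refl) (simp add: dk_def[abs_def])
    finally show ?thesis by (simp add: F_def)
  qed
  have "is_barnes_continuation P R d (\<lambda>p. complex_of_real (wp p)) F"
    unfolding is_barnes_continuation_def using Fmero Fser by blast
  hence gcont: "is_barnes_continuation P R d (\<lambda>p. complex_of_real (wp p))
                  (\<lambda>s. barnes_zeta P R s d (\<lambda>p. complex_of_real (wp p)))"
    by (intro barnes_zeta_is_cont) blast
  then obtain \<sigma>g where gmero: "(\<lambda>s. barnes_zeta P R s d (\<lambda>p. complex_of_real (wp p))) meromorphic_on UNIV"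
    and gser: "\<And>s. Re s > \<sigma>g \<Longrightarrow> barnes_zeta P R s d (\<lambda>p. complex_of_real (wp p)) = barnes_series P R s d (\<lambda>p. complex_of_real (wp p))"
    unfolding is_barnes_continuation_def by blast
  have ev: "\<forall>\<^sub>\<approx>s. barnes_zeta P R s d (\<lambda>p. complex_of_real (wp p)) = F s"
    by (rule mero_eq_cosparse[OF gmero Fmero, of "max \<sigma>g \<sigma>1"]) (simp add: gser Fser)
  have RHS: "complex_of_real w powr (- s) * (\<Prod>p<P. complex_of_real (\<beta> p) ^ R p) *
      (\<Sum>k \<in> PiE {..<P} (\<lambda>p. {k. real k \<le> \<beta> p - 1}).
          barnes_zeta P R s (\<lambda>p. (d p + of_nat (k p)) / complex_of_real (\<beta> p)) (\<lambda>_. 1)) = F s" for s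
  proof -
    have "(\<Prod>p<P. complex_of_real (\<beta> p) ^ R p) = (\<Prod>p<P. of_nat (B p) ^ R p)"
      by (intro prod.cong refl) (simp add: \<beta>B)
    moreover have "barnes_zeta P R s (\<lambda>p. (d p + of_nat (k p)) / complex_of_real (\<beta> p)) (\<lambda>_. 1) = Z k s" for k
      unfolding Z_def by (rule barnes_zeta_cong) (simp_all add: dk_def \<beta>B)
    ultimately show ?thesis unfolding Kset F_def by simp
  qed
  show ?thesis using ev by (simp add: RHS)
qed

end
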